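(* Consider the Kiefer–Wolfowitz algorithm defined below with $\alpha_t=a/(u+t)^\gamma$ ($a,u>0$, $\gamma\in[0,1]$) and a fixed $\nu>0$. Assume Conditions (D1), (D2) and (D3), and suppose $$\nu\le\sqrt{\kappa/(3c)},$$ where $c$ is the constant in (D3). Then there are positive constants $\hat J,\hat I,\hat K,\hat L$ such that the following hold. - For all $t\ge0$ and $z\ge0$: $$\mathbb P\Big(\min_{x\in\mathcal X^\star}\|x_{t+1}-x\|\ge z\Big)\le \hat J e^{-\hat I t^\gamma z}.$$ - For all $t\ge1$: $$\mathbb E\Big[\min_{x\in\mathcal X^\star}\|x_{t+1}-x\|\Big]\le\frac{\hat K}{t^\gamma} \qquad\text{and}\qquad \mathbb E\Big[l(x_{t+1})-\min_{\mathcal X}l\Big]\le\frac{\hat L}{t^\gamma}.$$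
   Context: $\mathcal X\subseteq\mathbb R^d$ is a nonempty closed bounded convex set, and $\Pi_{\mathcal X}$ is Euclidean projection onto $\mathcal X$. $\hat w$ is a random variable, and $l(x,w)$ is a real function defined for all $x\in\mathbb R^d$. Set $l(x):=\mathbb E[l(x,\hat w)]$, assume $\sup_{x\in\mathcal X}\operatorname{Var}(l(x,\hat w))<\infty$, and assume $l$ is Lipschitz continuous on $\mathcal X$ with gradient (or chosen subgradient) map $\nabla l$. Let $\mathcal X^\star=\arg\min_{\mathcal X}l$. $e_i$ denotes the $i$-th unit vector. For $\nu\in\mathbb R$ write $$\mathbf l(x\pm\nu,w):=\big(l(x\pm\nu e_i,w)\big)_{i=1}^d,\qquad \mathbf l(x\pm\nu):=\big(l(x\pm\nu e_i)\big)_{i=1}^d.$$ KW algorithm: $x_0\in\mathcal X$, and for $t\ge0$ $$c_t=\frac{\mathbf l(x_t+\nu,\hat w_t^+)-\mathbf l(x_t-\nu,\hat w_t^-)}{2\nu},\qquad y_{t+1}=x_t-\alpha_tc_t,\qquad x_{t+1}=\Pi_{\mathcal X}(y_{t+1}),$$ where $\hat w_t^\pm$ are i.i.d. copies of $\hat w$, independent of each other and of $\mathcal F_t$, and $\mathcal F_{t+1}$ is generated by $\mathcal F_t$ and $\hat w_t^\pm$. Condition (D1): there is $\kappa>0$ such that for every $x\in\mathcal X$ and every $x^\star\in\mathcal X^\star$ with $\|x-x^\star\|=\min_{z\in\mathcal X^\star}\|x-z\|$, $\nabla l(x)^\top(x-x^\star)\ge\kappa\|x-x^\star\|$. Condition (D2):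 there are $\lambda>0$ and $M<\infty$ such that $\mathbb E[e^{\lambda\|c_t\|}\mid\mathcal F_t]\le M$ almost surely for all $t$. Condition (D3): there is $c>0$ such that $$\Big\|\nabla l(x)-\frac{\mathbf l(x+\nu)-\mathbf l(x-\nu)}{2\nu}\Big\|\le c\nu^2\qquad\text{for all }x\in\mathcal X.$$ *)

theory Defs
  imports "HOL-Analysis.Analysis" "HOL-Probability.Probability"
begin

definition lvec :: "(real^'n \<Rightarrow> 'w \<Rightarrow> real) \<Rightarrow> real^'n \<Rightarrow> real \<Rightarrow> 'w \<Rightarrow> real^'n" where
  "lvec l x \<nu> w = (\<chi> i. l (x + \<nu> *\<^sub>R axis i 1) w)"

definition lmean :: "'w measure \<Rightarrow> (real^'n \<Rightarrow> 'w \<Rightarrow> real) \<Rightarrow> real^'n \<Rightarrow> real" where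
  "lmean D l x = (\<integral>w. l x w \<partial>D)"

definition kw_dir :: "(real^'n \<Rightarrow> 'w \<Rightarrow> real) \<Rightarrow> real \<Rightarrow> real^'n \<Rightarrow> 'w \<Rightarrow> 'w \<Rightarrow> real^'n" where
  "kw_dir l \<nu> x wp wm = (1 / (2 * \<nu>)) *\<^sub>R (lvec l x \<nu> wp - lvec l x (-\<nu>) wm)"

primrec kw_iter :: "(real^'n) set \<Rightarrow> (real^'n \<Rightarrow> 'w \<Rightarrow> real) \<Rightarrow> real \<Rightarrow> (nat \<Rightarrow> real) \<Rightarrow> real^'n
    \<Rightarrow> (nat \<Rightarrow> 'o \<Rightarrow> 'w) \<Rightarrow> (nat \<Rightarrow> 'o \<Rightarrow> 'w) \<Rightarrow> nat \<Rightarrow> 'o \<Rightarrow> real^'n" where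
  "kw_iter X l \<nu> \<alpha> x0 Wp Wm 0 \<omega> = x0"
| "kw_iter X l \<nu> \<alpha> x0 Wp Wm (Suc t) \<omega> =
     closest_point X (kw_iter X l \<nu> \<alpha> x0 Wp Wm t \<omega>
        - \<alpha> t *\<^sub>R kw_dir l \<nu> (kw_iter X l \<nu> \<alpha> x0 Wp Wm t \<omega>) (Wp t \<omega>) (Wm t \<omega>))"

definition kw_filt :: "'o measure \<Rightarrow> 'w measure \<Rightarrow> (nat \<Rightarrow> 'o \<Rightarrow> 'w) \<Rightarrow> (nat \<Rightarrow> 'o \<Rightarrow> 'w) \<Rightarrow> nat \<Rightarrow> 'o measure" where
  "kw_filt P N Wp Wm t = sigma (space P)
     (\<Union>s\<in>{..<t}. {Wp s -` A \<inter> space P | A. A \<in> sets N} \<union> {Wm s -` A \<inter> space P | A. A \<in> sets N})"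

text \<open>t^gamma with the convention 0^0 = 1.\<close>
definition tpow :: "nat \<Rightarrow> real \<Rightarrow> real" where
  "tpow t \<gamma> = (if t = 0 then (if \<gamma> = 0 then 1 else 0) else real t powr \<gamma>)"

end

theory Submission
  imports Defs
begin

lemma exp_quad_bound: "exp (y::real) \<le> 1 + y + y\<^sup>2 * exp \<bar>y\<bar> / 2"
proof (cases "y \<ge> 0")
  case True
  obtain t where t: "\<bar>t\<bar> \<le> \<bar>y\<bar>" "exp y = (\<Sum>m<2. (y ^ m) / fact m) + (exp t / fact 2) * y ^ 2"
    using Maclaurin_exp_le by blast
  have "exp t \<le> exp \<bar>y\<bar>" using t(1) by simp
  then have "exp t * y^2 \<le> exp \<bar>y\<bar> * y^2" by (rule mult_right_mono) simp
  then have "(exp t / fact 2) * y ^ 2 \<le> y\<^sup>2 * exp \<bar>y\<bar> / 2"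
    by (simp add: fact_numeral mult.commute)
  moreover have "(\<Sum>m<2. (y ^ m) / fact m) = 1 + y" by (simp add: numeral_2_eq_2)
  ultimately show ?thesis using t(2) by linarith
next
  case False
  obtain t where t: "\<bar>t\<bar> \<le> \<bar>y\<bar>" "exp y = (\<Sum>m<3. (y ^ m) / fact m) + (exp t / fact 3) * y ^ 3"
    using Maclaurin_exp_le by blast
  have "y ^ 3 \<le> 0" using False by (simp add: power_le_zero_eq)
  then have "(exp t / fact 3) * y ^ 3 \<le> 0" by (rule mult_nonneg_nonpos[rotated]) simp
  moreover have "(\<Sum>m<3. (y ^ m) / fact m) = 1 + y + y\<^sup>2/2"
    by (simp add: numeral_3_eq_3 numeral_2_eq_2 power2_eq_square)
  moreover have "y\<^sup>2 * 1 \<le> y\<^sup>2 * exp \<bar>y\<bar>" by (rule mult_left_mono) auto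
  then have "y\<^sup>2/2 \<le> y\<^sup>2 * exp \<bar>y\<bar> / 2" by simp
  ultimately show ?thesis using t(2) by linarith
qed

lemma exp_minus_one_le: assumes "(u::real) \<ge> 0" shows "exp u - 1 \<le> u * exp u"
proof -
  have "1 - u \<le> exp (-u)" using exp_ge_add_one_self[of "-u"] by simp
  then have "(1 - u) * exp u \<le> exp (-u) * exp u" by (simp add: mult_right_mono)
  then show ?thesis by (simp add: exp_minus field_simps)
qed

definition gf :: "real \<Rightarrow> real \<Rightarrow> real" where "gf \<omega> y = (exp (\<omega> * y) - 1) / \<omega>"

lemma gf_ge: assumes "\<omega> > 0" shows "y \<le> gf \<omega> y"
  using exp_ge_add_one_self[of "\<omega>*y"] assms by (simp add: gf_def field_simps)

lemma gf_nonneg: assumes "\<omega> > 0" "y \<ge> 0" shows "0 \<le> gf \<omega> y"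
  using gf_ge[OF assms(1), of y] assms by simp

lemma gf_le_exp: assumes "\<omega> > 0" shows "gf \<omega> y \<le> exp (\<omega> * y) / \<omega>"
  using assms by (simp add: gf_def divide_right_mono)

lemma gf_le_lin: assumes "\<omega> > 0" "0 \<le> y" "y \<le> R" shows "gf \<omega> y \<le> exp (\<omega> * R) * y"
proof -
  have "exp (\<omega>*y) - 1 \<le> (\<omega>*y) * exp (\<omega>*y)" using exp_minus_one_le[of "\<omega>*y"] assms by simp
  also have "\<dots> \<le> (\<omega>*y) * exp (\<omega>*R)" using assms by (intro mult_left_mono) auto
  finally show ?thesis using assms by (simp add: gf_def field_simps)
qed

lemma gf_lip: assumes "\<omega> > 0" "0 \<le> a" "a \<le> R" "0 \<le> b" "b \<le> R"
  shows "\<bar>gf \<omega> a - gf \<omega> b\<bar> \<le> exp (\<omega> * R) * \<bar>a - b\<bar>"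
proof -
  have key: "gf \<omega> a - gf \<omega> b \<le> exp (\<omega> * R) * (a - b)" if "0 \<le> b" "b \<le> a" "a \<le> R" for a b
  proof -
    have "exp (\<omega>*a) - exp (\<omega>*b) = exp (\<omega>*b) * (exp (\<omega>*(a-b)) - 1)"
      by (simp add: algebra_simps flip: exp_add)
    also have "\<dots> \<le> exp (\<omega>*b) * ((\<omega>*(a-b)) * exp (\<omega>*(a-b)))"
      using exp_minus_one_le[of "\<omega>*(a-b)"] that assms(1) by (intro mult_left_mono) auto
    also have "\<dots> = \<omega>*(a-b) * exp (\<omega>*a)" by (simp add: algebra_simps flip: exp_add)
    also have "\<dots> \<le> \<omega>*(a-b) * exp (\<omega>*R)" using that assms(1) by (intro mult_left_mono) auto
    finally show ?thesis using assms(1) by (simp add: gf_def field_simps)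
  qed
  have mono: "gf \<omega> b \<le> gf \<omega> a" if "b \<le> a" for a b
    using that assms(1) by (simp add: gf_def divide_right_mono)
  show ?thesis
  proof (cases "b \<le> a")
    case True then show ?thesis using key[of b a] mono[of b a] assms by simp
  next
    case False then show ?thesis using key[of a b] mono[of a b] assms by simp
  qed
qed

lemma gf_taylor: assumes "\<omega> > 0" "0 \<le> a" "a \<le> R" "0 \<le> b" "b \<le> R"
  shows "gf \<omega> b \<le> gf \<omega> a + exp (\<omega> * a) * (b - a) + \<omega> * exp (\<omega> * R) * (b - a)\<^sup>2 / 2"
proof -
  let ?y = "\<omega> * (b - a)"
  have e: "exp (\<omega>*b) = exp (\<omega>*a) * exp ?y" by (simp add: algebra_simps flip: exp_add)
  have q: "exp ?y \<le> 1 + ?y + ?y\<^sup>2 * exp (max ?y 0) / 2"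
  proof (cases "?y \<ge> 0")
    case True then show ?thesis using exp_quad_bound[of ?y] by simp
  next
    case False
    obtain t where t: "\<bar>t\<bar> \<le> \<bar>?y\<bar>" "exp ?y = (\<Sum>m<3. (?y ^ m) / fact m) + (exp t / fact 3) * ?y ^ 3"
      using Maclaurin_exp_le by blast
    have "?y ^ 3 \<le> 0" using False by (simp only: power_le_zero_eq) simp
    then have "(exp t / fact 3) * ?y ^ 3 \<le> 0" by (rule mult_nonneg_nonpos[rotated]) simp
    moreover have "(\<Sum>m<3. (?y ^ m) / fact m) = 1 + ?y + ?y\<^sup>2/2"
      by (simp add: numeral_3_eq_3 numeral_2_eq_2 power2_eq_square)
    ultimately show ?thesis using t(2) False by simp
  qed
  have m: "exp (\<omega>*a) * exp (max ?y 0) \<le> exp (\<omega> * R)"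
  proof -
    have "\<omega>*a + max ?y 0 \<le> \<omega>*R" using assms by (auto simp: max_def algebra_simps intro: mult_left_mono)
    then show ?thesis by (simp flip: exp_add)
  qed
  have "exp (\<omega>*b) \<le> exp (\<omega>*a) * (1 + ?y + ?y\<^sup>2 * exp (max ?y 0) / 2)"
    unfolding e by (intro mult_left_mono q) auto
  also have "\<dots> = exp (\<omega>*a) + exp (\<omega>*a) * ?y + ?y\<^sup>2 * (exp (\<omega>*a) * exp (max ?y 0)) / 2"
    by (simp add: algebra_simps)
  also have "\<dots> \<le> exp (\<omega>*a) + exp (\<omega>*a) * ?y + ?y\<^sup>2 * exp (\<omega> * R) / 2"
    using m by (intro add_left_mono divide_right_mono mult_left_mono) auto
  finally have "exp (\<omega>*b) - exp (\<omega>*a) \<le> exp (\<omega>*a) * ?y + ?y\<^sup>2 * exp (\<omega> * R) / 2" by simp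
  then have "(exp (\<omega>*b) - exp (\<omega>*a)) / \<omega> \<le> (exp (\<omega>*a) * ?y + ?y\<^sup>2 * exp (\<omega> * R) / 2) / \<omega>"
    using assms(1) by (intro divide_right_mono) auto
  also have "\<dots> = exp (\<omega> * a) * (b - a) + \<omega> * exp (\<omega> * R) * (b - a)\<^sup>2 / 2"
    using assms(1) by (simp add: field_simps power2_eq_square)
  also have "(exp (\<omega>*b) - exp (\<omega>*a)) / \<omega> = gf \<omega> b - gf \<omega> a"
    by (simp add: gf_def diff_divide_distrib)
  finally show ?thesis by simp
qed

lemma powr_succ_le: assumes "(x::real) \<ge> 1" "0 \<le> g" "g \<le> 1"
  shows "(x+1) powr g \<le> x powr g + 1"
proof -
  have eq: "x * (1 + 1/x) = x + 1" using assms by (simp add: field_simps)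
  have "(x+1) powr g = (x * (1 + 1/x)) powr g" by (simp only: eq)
  also have "\<dots> = x powr g * (1 + 1/x) powr g" by (rule powr_mult)
  also have "(1 + 1/x) powr g \<le> (1 + 1/x) powr 1" using assms by (intro powr_mono) auto
  also have "x powr g * (1 + 1/x) powr 1 = x powr g + x powr g / x" using assms by (simp add: field_simps)
  also have "x powr g \<le> x powr 1" using assms by (intro powr_mono) auto
  then have "x powr g / x \<le> 1" using assms by simp
  finally show ?thesis using assms by simp
qed

lemma powr_ratio_le: assumes "(x::real) \<ge> 1" "0 \<le> g" "g \<le> 1"
  shows "(x+1) powr g / x powr g \<le> 2" and "1 \<le> (x+1) powr g / x powr g"
proof -
  have r: "(x+1) powr g / x powr g = ((x+1)/x) powr g" using assms by (simp add: powr_divide)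
  have "((x+1)/x) powr g \<le> ((x+1)/x) powr 1" using assms by (intro powr_mono) (auto simp: field_simps)
  also have "\<dots> \<le> 2" using assms by (simp add: field_simps)
  finally show "(x+1) powr g / x powr g \<le> 2" using r by simp
  have "1 \<le> ((x+1)/x) powr g" using assms by (intro ge_one_powr_ge_zero) (auto simp: field_simps)
  then show "1 \<le> (x+1) powr g / x powr g" using r by simp
qed

lemma norm_step_bound:
  fixes v c :: "'a::real_inner"
  assumes d: "d > 0" "norm v = d"
  shows "norm (v - a *\<^sub>R c) \<le> d - a * (c \<bullet> v) / d + a\<^sup>2 * (norm c)\<^sup>2 / (2*d)"
proof -
  define r where "r = norm (v - a *\<^sub>R c)"
  have e1: "r\<^sup>2 = (v - a *\<^sub>R c) \<bullet> (v - a *\<^sub>R c)" by (simp add: r_def power2_norm_eq_inner)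
  have e2: "(v - a *\<^sub>R c) \<bullet> (v - a *\<^sub>R c) = v \<bullet> v - 2*a*(c \<bullet> v) + a\<^sup>2 * (c \<bullet> c)"
    by (simp add: inner_diff_left inner_diff_right inner_commute power2_eq_square algebra_simps)
  have e3: "v \<bullet> v = d\<^sup>2" "c \<bullet> c = (norm c)\<^sup>2" using d by (simp_all add: power2_norm_eq_inner[symmetric])
  have r2: "r\<^sup>2 = d\<^sup>2 - 2*a*(c \<bullet> v) + a\<^sup>2 * (norm c)\<^sup>2" using e1 e2 e3 by simp
  have "0 \<le> (r - d)\<^sup>2" by simp
  then have "2*d*r \<le> r\<^sup>2 + d\<^sup>2" by (simp add: power2_eq_square algebra_simps)
  then have "r \<le> (r\<^sup>2 + d\<^sup>2) / (2*d)" using d by (simp add: field_simps)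
  also have "\<dots> = d - a * (c \<bullet> v) / d + a\<^sup>2 * (norm c)\<^sup>2 / (2*d)"
    unfolding r2 using d by (simp add: field_simps power2_eq_square)
  finally show ?thesis unfolding r_def .
qed

lemma sq_le_exp: assumes "(l::real) > 0" "y \<ge> 0" shows "y\<^sup>2 \<le> 2 * exp (l*y) / l\<^sup>2"
proof -
  have "0 \<le> 1 + l*y" using assms by simp
  moreover have "1 + l*y + (l*y)\<^sup>2/2 \<le> exp (l*y)" using exp_lower_Taylor_quadratic[of "l*y"] assms by simp
  ultimately have "(l*y)\<^sup>2/2 \<le> exp (l*y)" by linarith
  then show ?thesis using assms by (simp add: field_simps power2_eq_square)
qed

lemma lin_le_exp: assumes "(l::real) > 0" "y \<ge> 0" shows "y \<le> exp (l*y) / l"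
proof -
  have "l*y \<le> exp (l*y)" using exp_ge_add_one_self[of "l*y"] by linarith
  then show ?thesis using assms by (simp add: field_simps)
qed

lemma frozen_step:
  fixes Q :: "'z measure" and c :: "'z \<Rightarrow> 'a::euclidean_space"
  assumes Q: "prob_space Q" and cm[measurable]: "c \<in> borel_measurable Q"
    and lam: "lam > 0" and M: "M \<ge> 0"
    and mom: "(\<integral>\<^sup>+z. ennreal (exp (lam * norm (c z))) \<partial>Q) \<le> ennreal M"
    and X: "closed X" "convex X" "X \<noteq> {}" and x: "x \<in> X"
    and S: "closed S" "S \<noteq> {}" "S \<subseteq> X"
    and R: "\<forall>y\<in>X. infdist y S \<le> R"
    and mean: "\<forall>p\<in>S. dist x p = infdist x S \<longrightarrow> (2*\<kappa>/3) * infdist x S \<le> (\<integral>z. c z \<bullet> (x - p) \<partial>Q)"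
    and kap: "\<kappa> > 0" and om: "\<omega> > 0" and al: "\<alpha> > 0"
    and s: "\<eta> > 0" "\<eta> \<le> \<theta>1 * \<alpha>" "\<theta>1 * \<alpha> \<le> 2*\<eta>"
    and c1: "2*\<eta>*exp(\<omega>*R) \<le> lam/2"
    and c2: "2*\<eta>*(exp(\<omega>*R))\<^sup>2*(8*M/lam\<^sup>2) \<le> \<kappa>/12"
    and c3: "\<alpha>*\<omega>*exp(\<omega>*R)*(2*M/lam\<^sup>2)/2 \<le> \<kappa>/24"
    and th: "0 \<le> \<theta>0" "\<theta>0 \<le> \<theta>1" "(\<theta>1 - \<theta>0)/\<omega> \<le> \<eta>*\<kappa>/6"
  shows "(\<integral>\<^sup>+z. ennreal (exp (\<theta>1 * gf \<omega> (infdist (closest_point X (x - \<alpha> *\<^sub>R c z)) S))) \<partial>Q)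
         \<le> ennreal (exp (-(\<eta>*\<kappa>/12)) * exp (\<theta>0 * gf \<omega> (infdist x S)) + exp (2*\<eta>*exp(\<omega>*R)*(3*(2*M/lam\<^sup>2)/(2*\<kappa>))) * M)"
proof -
  interpret Q: prob_space Q by fact
  define E where "E = exp (\<omega>*R)"
  define K2 where "K2 = 2*M/lam\<^sup>2"
  define K3 where "K3 = 8*M/lam\<^sup>2"
  define b where "b = 3*K2/(2*\<kappa>)"
  define d where "d = infdist x S"
  define d' where "d' z = infdist (closest_point X (x - \<alpha> *\<^sub>R c z)) S" for z
  define F where "F z = exp (lam * norm (c z))" for z
  define s where "s = \<theta>1 * \<alpha>"
  define A where "A = exp (\<theta>1 * gf \<omega> d)"
  have R0: "0 \<le> R" using R x infdist_nonneg[of x S] by (meson order_trans)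
  have E1: "1 \<le> E" using R0 om by (simp add: E_def)
  have th1: "0 \<le> \<theta>1" using th by simp
  have K20: "0 \<le> K2" "0 \<le> K3" using M by (auto simp: K2_def K3_def)
  have b0: "0 \<le> b" using K20 kap by (simp add: b_def)
  have d0: "0 \<le> d" "d \<le> R" using R x by (auto simp: d_def infdist_nonneg)
  have cpX: "closest_point X y \<in> X" for y using closest_point_in_set X by blast
  have d'0: "0 \<le> d' z" "d' z \<le> R" for z using R cpX by (auto simp: d'_def infdist_nonneg)
  have Dabs: "\<bar>d' z - d\<bar> \<le> \<alpha> * norm (c z)" for z
  proof -
    have "\<bar>d' z - d\<bar> \<le> dist (closest_point X (x - \<alpha> *\<^sub>R c z)) x"
      unfolding d'_def d_def by (rule infdist_triangle_abs)
    also have "\<dots> = dist (closest_point X (x - \<alpha> *\<^sub>R c z)) (closest_point X x)"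
      using closest_point_self[OF x] by simp
    also have "\<dots> \<le> dist (x - \<alpha> *\<^sub>R c z) x" by (rule closest_point_lipschitz[OF X(2,1,3)])
    also have "\<dots> = \<alpha> * norm (c z)" using al by (simp add: dist_norm)
    finally show ?thesis .
  qed
  have cont1: "continuous_on UNIV (\<lambda>y. closest_point X (x - \<alpha> *\<^sub>R y))"
    by (rule continuous_on_compose2[OF continuous_on_closest_point[OF X(2,1,3)], of UNIV])
       (auto intro!: continuous_intros)
  have cont: "continuous_on UNIV (\<lambda>y. infdist (closest_point X (x - \<alpha> *\<^sub>R y)) S)"
    by (rule continuous_on_infdist[OF cont1])
  have d'm[measurable]: "d' \<in> borel_measurable Q"
    unfolding d'_def by (rule borel_measurable_continuous_on[OF cont cm])
  have Fm[measurable]: "F \<in> borel_measurable Q" unfolding F_def by measurable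
  have F0: "0 \<le> F z" for z by (simp add: F_def)
  have Fint: "integrable Q F"
    using mom by (intro integrableI_nonneg) (auto simp: F_def top.not_eq_extremum intro: le_less_trans)
  have FM: "(\<integral>z. F z \<partial>Q) \<le> M"
  proof -
    have "ennreal (\<integral>z. F z \<partial>Q) = (\<integral>\<^sup>+z. ennreal (F z) \<partial>Q)"
      using Fint F0 by (simp add: nn_integral_eq_integral)
    also have "\<dots> \<le> ennreal M" using mom by (simp add: F_def)
    finally show ?thesis using M by simp
  qed
  have target0: "0 \<le> exp (-(\<eta>*\<kappa>/12)) * exp (\<theta>0 * gf \<omega> (infdist x S))" by simp
  show ?thesis
  proof (cases "d \<le> b * \<alpha>")
    case True
    have pw: "exp (\<theta>1 * gf \<omega> (d' z)) \<le> exp (2*\<eta>*E*b) * F z" for z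
    proof -
      have "gf \<omega> (d' z) \<le> E * d' z" unfolding E_def using gf_le_lin[OF om d'0] .
      moreover have "d' z \<le> \<alpha> * (b + norm (c z))" using Dabs[of z] True by (simp add: algebra_simps)
      ultimately have "gf \<omega> (d' z) \<le> E * (\<alpha> * (b + norm (c z)))"
        using E1 by (meson mult_left_mono order_trans zero_le_one)
      then have "\<theta>1 * gf \<omega> (d' z) \<le> \<theta>1 * (E * (\<alpha> * (b + norm (c z))))"
        using th1 by (rule mult_left_mono)
      also have "\<dots> = s * (E * (b + norm (c z)))" by (simp add: s_def)
      also have "\<dots> \<le> (2*\<eta>) * (E * (b + norm (c z)))"
        using s(3) E1 b0 by (intro mult_right_mono) (auto simp: s_def)
      also have "\<dots> = 2*\<eta>*E*b + (2*\<eta>*E) * norm (c z)" by (simp add: algebra_simps)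
      also have "\<dots> \<le> 2*\<eta>*E*b + lam * norm (c z)"
        using c1 lam by (intro add_left_mono mult_right_mono) (auto simp: E_def)
      finally show ?thesis by (simp add: F_def exp_add[symmetric])
    qed
    have "(\<integral>\<^sup>+z. ennreal (exp (\<theta>1 * gf \<omega> (d' z))) \<partial>Q) \<le> (\<integral>\<^sup>+z. ennreal (exp (2*\<eta>*E*b)) * ennreal (F z) \<partial>Q)"
      using pw F0 by (intro nn_integral_mono) (metis ennreal_leI ennreal_mult exp_ge_zero)
    also have "\<dots> = ennreal (exp (2*\<eta>*E*b)) * (\<integral>\<^sup>+z. ennreal (F z) \<partial>Q)"
      by (rule nn_integral_cmult) measurable
    also have "\<dots> \<le> ennreal (exp (2*\<eta>*E*b)) * ennreal M"
      using mom by (intro mult_left_mono) (auto simp: F_def)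
    also have "\<dots> = ennreal (exp (2*\<eta>*E*b) * M)" using M by (simp add: ennreal_mult)
    also have "\<dots> \<le> ennreal (exp (-(\<eta>*\<kappa>/12)) * exp (\<theta>0 * gf \<omega> (infdist x S)) + exp (2*\<eta>*E*b) * M)"
      using target0 by (intro ennreal_leI) linarith
    finally show ?thesis by (simp add: d'_def E_def b_def K2_def)
  next
    case False
    have dba: "b * \<alpha> < d" using False by simp
    have dpos: "d > 0" using dba b0 al by (meson le_less_trans mult_nonneg_nonneg less_imp_le)
    obtain p where pS: "p \<in> S" and pd: "infdist x S = dist x p"
      using infdist_attains_inf[OF S(1,2)] by metis
    define v where "v = x - p"
    have nv: "norm v = d" using pd by (simp add: v_def d_def dist_norm)
    have pX: "p \<in> X" using pS S(3) by auto
    have dU: "d' z \<le> d - \<alpha> * (c z \<bullet> v) / d + \<alpha>\<^sup>2 * (norm (c z))\<^sup>2 / (2*d)" for z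
    proof -
      have "d' z \<le> dist (closest_point X (x - \<alpha> *\<^sub>R c z)) p" unfolding d'_def by (rule infdist_le[OF pS])
      also have "\<dots> = dist (closest_point X (x - \<alpha> *\<^sub>R c z)) (closest_point X p)"
        using closest_point_self[OF pX] by simp
      also have "\<dots> \<le> dist (x - \<alpha> *\<^sub>R c z) p" by (rule closest_point_lipschitz[OF X(2,1,3)])
      also have "\<dots> = norm (v - \<alpha> *\<^sub>R c z)" by (simp add: dist_norm v_def algebra_simps)
      also have "\<dots> \<le> d - \<alpha> * (c z \<bullet> v) / d + \<alpha>\<^sup>2 * (norm (c z))\<^sup>2 / (2*d)"
        by (rule norm_step_bound[OF dpos nv])
      finally show ?thesis .
    qed
    define e where "e = exp (\<omega>*d)"
    have e1: "1 \<le> e" using om d0 by (simp add: e_def)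
    define P where "P = \<theta>1 * (e * \<alpha>\<^sup>2 / (2*d) + \<omega>*E*\<alpha>\<^sup>2/2)"
    define k1 where "k1 = -(\<theta>1 * e * \<alpha> / d)"
    define k2 where "k2 = P * (2/lam\<^sup>2) + (s*E)\<^sup>2 * (8/lam\<^sup>2) / 2"
    have P0: "0 \<le> P" using th1 dpos al om E1 e1 by (simp add: P_def)
    have k2pos: "0 \<le> k2" using P0 lam by (simp add: k2_def)
    have k1neg: "k1 \<le> 0" using th1 dpos al e1 by (simp add: k1_def)
    have A0: "0 < A" by (simp add: A_def)
    have sE: "s * E \<le> lam / 2"
    proof -
      have h: "s*E \<le> (2*\<eta>)*E" using s(3) E1 by (intro mult_right_mono) (auto simp: s_def)
      show ?thesis using h c1 unfolding E_def by linarith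
    qed
    have s0: "0 \<le> s" using s(1,2) by (simp add: s_def)
    have pw: "exp (\<theta>1 * gf \<omega> (d' z)) \<le> A * (1 + k1 * (c z \<bullet> v) + k2 * F z)" for z
    proof -
      define D where "D = d' z - d"
      define Xz where "Xz = \<theta>1 * (gf \<omega> (d' z) - gf \<omega> d)"
      define nc where "nc = norm (c z)"
      have nc0: "0 \<le> nc" by (simp add: nc_def)
      have t1: "gf \<omega> (d' z) \<le> gf \<omega> d + e * D + \<omega> * E * D\<^sup>2 / 2"
        using gf_taylor[OF om d0 d'0[of z]] by (simp add: D_def E_def e_def)
      have DA: "\<bar>D\<bar> \<le> \<alpha> * nc" using Dabs[of z] by (simp add: D_def nc_def)
      have t2: "D\<^sup>2 \<le> \<alpha>\<^sup>2 * nc\<^sup>2"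
      proof -
        have "\<bar>D\<bar>\<^sup>2 \<le> (\<alpha> * nc)\<^sup>2" using DA by (intro power_mono) auto
        then show ?thesis by (simp add: power_mult_distrib)
      qed
      have t3: "D \<le> - \<alpha> * (c z \<bullet> v) / d + \<alpha>\<^sup>2 * nc\<^sup>2 / (2*d)" using dU[of z] by (simp add: D_def nc_def)
      have Xbar: "Xz \<le> \<theta>1 * (e * (- \<alpha> * (c z \<bullet> v) / d + \<alpha>\<^sup>2 * nc\<^sup>2 / (2*d)) + \<omega> * E * (\<alpha>\<^sup>2 * nc\<^sup>2) / 2)"
      proof -
        have "gf \<omega> (d' z) - gf \<omega> d \<le> e * D + \<omega> * E * D\<^sup>2 / 2" using t1 by simp
        also have "\<dots> \<le> e * (- \<alpha> * (c z \<bullet> v) / d + \<alpha>\<^sup>2 * nc\<^sup>2 / (2*d)) + \<omega> * E * (\<alpha>\<^sup>2 * nc\<^sup>2) / 2"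
          using t2 t3 om E1 e1 by (intro add_mono mult_left_mono divide_right_mono) auto
        finally show ?thesis unfolding Xz_def using th1 by (rule mult_left_mono)
      qed
      have Xabs: "\<bar>Xz\<bar> \<le> s * E * nc"
      proof -
        have "\<bar>gf \<omega> (d' z) - gf \<omega> d\<bar> \<le> E * \<bar>d' z - d\<bar>" using gf_lip[OF om d'0[of z] d0] by (simp add: E_def)
        also have "\<dots> \<le> E * (\<alpha> * nc)" using Dabs[of z] E1 by (intro mult_left_mono) (auto simp: nc_def)
        finally have "\<theta>1 * \<bar>gf \<omega> (d' z) - gf \<omega> d\<bar> \<le> \<theta>1 * (E * (\<alpha> * nc))" using th1 by (rule mult_left_mono)
        moreover have "\<bar>Xz\<bar> = \<theta>1 * \<bar>gf \<omega> (d' z) - gf \<omega> d\<bar>" using th1 by (simp add: Xz_def abs_mult)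
        ultimately show ?thesis by (simp add: s_def algebra_simps)
      qed
      have ncF: "nc\<^sup>2 \<le> (2/lam\<^sup>2) * F z" using sq_le_exp[OF lam nc0] by (simp add: F_def nc_def)
      have sq: "Xz\<^sup>2 * exp \<bar>Xz\<bar> \<le> (s*E)\<^sup>2 * (8/lam\<^sup>2) * F z"
      proof -
        have a1: "Xz\<^sup>2 \<le> (s*E*nc)\<^sup>2" using Xabs power_mono[of "\<bar>Xz\<bar>" "s*E*nc" 2] by simp
        have "s*E*nc \<le> lam/2 * nc" using sE nc0 by (rule mult_right_mono)
        then have a2: "exp \<bar>Xz\<bar> \<le> exp (lam/2 * nc)" using Xabs by simp
        have a3: "nc\<^sup>2 \<le> 2 * exp (lam/2*nc) / (lam/2)\<^sup>2" using sq_le_exp[of "lam/2" nc] lam nc0 by simp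
        have "Xz\<^sup>2 * exp \<bar>Xz\<bar> \<le> (s*E*nc)\<^sup>2 * exp (lam/2 * nc)"
          using a1 a2 by (intro mult_mono) auto
        also have "\<dots> = (s*E)\<^sup>2 * (nc\<^sup>2 * exp (lam/2 * nc))" by (simp add: power_mult_distrib)
        also have "\<dots> \<le> (s*E)\<^sup>2 * ((2 * exp (lam/2*nc) / (lam/2)\<^sup>2) * exp (lam/2 * nc))"
          using a3 by (intro mult_left_mono mult_right_mono) auto
        also have "\<dots> = (s*E)\<^sup>2 * (8/lam\<^sup>2) * (exp (lam/2*nc) * exp (lam/2*nc))"
          using lam by (simp add: field_simps power2_eq_square)
        also have "exp (lam/2*nc) * exp (lam/2*nc) = F z" by (simp add: F_def nc_def flip: exp_add)
        finally show ?thesis .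
      qed
      have eqX: "\<theta>1 * (e * (- \<alpha> * (c z \<bullet> v) / d + \<alpha>\<^sup>2 * nc\<^sup>2 / (2*d)) + \<omega> * E * (\<alpha>\<^sup>2 * nc\<^sup>2) / 2)
          = k1 * (c z \<bullet> v) + P * nc\<^sup>2"
        using dpos by (simp add: k1_def P_def field_simps)
      have "exp Xz \<le> 1 + Xz + Xz\<^sup>2 * exp \<bar>Xz\<bar> / 2" by (rule exp_quad_bound)
      also have "\<dots> \<le> 1 + (k1 * (c z \<bullet> v) + P * ((2/lam\<^sup>2) * F z)) + (s*E)\<^sup>2 * (8/lam\<^sup>2) * F z / 2"
      proof -
        have "Xz \<le> k1 * (c z \<bullet> v) + P * ((2/lam\<^sup>2) * F z)"
          using Xbar eqX mult_left_mono[OF ncF P0] by linarith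
        moreover have "Xz\<^sup>2 * exp \<bar>Xz\<bar> / 2 \<le> (s*E)\<^sup>2 * (8/lam\<^sup>2) * F z / 2"
          using sq by (rule divide_right_mono) simp
        ultimately show ?thesis by linarith
      qed
      also have "\<dots> = 1 + k1 * (c z \<bullet> v) + k2 * F z" by (simp add: k2_def algebra_simps)
      finally have ex: "exp Xz \<le> 1 + k1 * (c z \<bullet> v) + k2 * F z" .
      have "exp (\<theta>1 * gf \<omega> (d' z)) = A * exp Xz" by (simp add: A_def Xz_def algebra_simps flip: exp_add)
      also have "\<dots> \<le> A * (1 + k1 * (c z \<bullet> v) + k2 * F z)" using ex A0 by (intro mult_left_mono) auto
      finally show ?thesis .
    qed
    have cvm[measurable]: "(\<lambda>z. c z \<bullet> v) \<in> borel_measurable Q" by measurable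
    have cvint: "integrable Q (\<lambda>z. c z \<bullet> v)"
    proof (rule Bochner_Integration.integrable_bound[OF integrable_mult_right[OF Fint, of "d/lam"] cvm])
      show "AE z in Q. norm (c z \<bullet> v) \<le> norm (d/lam * F z)"
      proof (rule AE_I2)
        fix z
        have "norm (c z \<bullet> v) \<le> norm (c z) * norm v" using Cauchy_Schwarz_ineq2 by simp
        also have "\<dots> \<le> (F z / lam) * d" using lin_le_exp[OF lam, of "norm (c z)"] nv dpos lam
          by (intro mult_mono) (auto simp: F_def)
        also have "\<dots> = norm (d/lam * F z)" using dpos lam F0[of z] by simp
        finally show "norm (c z \<bullet> v) \<le> norm (d/lam * F z)" .
      qed
    qed
    have lm[measurable]: "(\<lambda>z. exp (\<theta>1 * gf \<omega> (d' z))) \<in> borel_measurable Q"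
      unfolding gf_def by measurable
    have lint: "integrable Q (\<lambda>z. exp (\<theta>1 * gf \<omega> (d' z)))"
    proof (rule Bochner_Integration.integrable_bound[OF finite_measure.integrable_const[OF Q.finite_measure_axioms, of "exp (\<theta>1 * (E * R))"] lm])
      show "AE z in Q. norm (exp (\<theta>1 * gf \<omega> (d' z))) \<le> norm (exp (\<theta>1 * (E * R)))"
      proof (rule AE_I2)
        fix z
        have "gf \<omega> (d' z) \<le> E * d' z" unfolding E_def using gf_le_lin[OF om d'0] .
        also have "\<dots> \<le> E * R" using d'0[of z] E1 by (intro mult_left_mono) auto
        finally show "norm (exp (\<theta>1 * gf \<omega> (d' z))) \<le> norm (exp (\<theta>1 * (E * R)))"
          using th1 by (simp add: mult_left_mono)
      qed
    qed
    have rint: "integrable Q (\<lambda>z. A + (A*k1) * (c z \<bullet> v) + (A*k2) * F z)"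
      using cvint Fint by (intro Bochner_Integration.integrable_add Bochner_Integration.integrable_mult_right finite_measure.integrable_const[OF Q.finite_measure_axioms])
    have I1: "(2*\<kappa>/3) * d \<le> (\<integral>z. c z \<bullet> v \<partial>Q)" using mean pS pd by (auto simp: d_def v_def)
    have lhs_le: "(\<integral>z. exp (\<theta>1 * gf \<omega> (d' z)) \<partial>Q) \<le> A + (A*k1)*(\<integral>z. c z \<bullet> v \<partial>Q) + (A*k2)*(\<integral>z. F z \<partial>Q)"
    proof -
      have "(\<integral>z. exp (\<theta>1 * gf \<omega> (d' z)) \<partial>Q) \<le> (\<integral>z. A + (A*k1) * (c z \<bullet> v) + (A*k2) * F z \<partial>Q)"
        by (rule integral_mono[OF lint rint]) (use pw in \<open>simp add: algebra_simps\<close>)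
      also have "\<dots> = (\<integral>z. A + (A*k1) * (c z \<bullet> v) \<partial>Q) + (\<integral>z. (A*k2) * F z \<partial>Q)"
        using cvint Fint by (intro Bochner_Integration.integral_add Bochner_Integration.integrable_add Bochner_Integration.integrable_mult_right finite_measure.integrable_const[OF Q.finite_measure_axioms])
      also have "(\<integral>z. A + (A*k1) * (c z \<bullet> v) \<partial>Q) = (\<integral>z. A \<partial>Q) + (\<integral>z. (A*k1) * (c z \<bullet> v) \<partial>Q)"
        using cvint by (intro Bochner_Integration.integral_add Bochner_Integration.integrable_mult_right finite_measure.integrable_const[OF Q.finite_measure_axioms])
      finally show ?thesis by (simp add: Q.prob_space)
    qed
    define q where "q = s * e * \<kappa> / 3"
    have q1: "k1 * ((2*\<kappa>/3) * d) = - 2 * q" using dpos by (simp add: k1_def q_def s_def field_simps)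
    have aK2: "\<alpha> * K2 / (2*d) \<le> \<kappa>/3"
    proof -
      have "3*K2*\<alpha> < 2*\<kappa>*d" using dba kap by (simp add: b_def field_simps)
      then show ?thesis using dpos kap by (simp add: field_simps)
    qed
    have term1: "\<theta>1 * (e * \<alpha>\<^sup>2 / (2*d)) * K2 \<le> q"
    proof -
      have "\<theta>1 * (e * \<alpha>\<^sup>2 / (2*d)) * K2 = s * e * (\<alpha> * K2 / (2*d))" by (simp add: s_def power2_eq_square)
      also have "\<dots> \<le> s * e * (\<kappa>/3)" using aK2 s0 e1 by (intro mult_left_mono) auto
      finally show ?thesis by (simp add: q_def)
    qed
    have term2: "\<theta>1 * (\<omega>*E*\<alpha>\<^sup>2/2) * K2 \<le> s * (\<kappa>/24)"
    proof -
      have "\<theta>1 * (\<omega>*E*\<alpha>\<^sup>2/2) * K2 = s * (\<alpha>*\<omega>*E*K2/2)" by (simp add: s_def power2_eq_square)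
      also have "\<dots> \<le> s * (\<kappa>/24)" using c3 s0 by (intro mult_left_mono) (auto simp: E_def K2_def)
      finally show ?thesis .
    qed
    have term3: "(s*E)\<^sup>2 * K3 / 2 \<le> s * (\<kappa>/24)"
    proof -
      have "(s*E)\<^sup>2 * K3 / 2 = s * (s * E\<^sup>2 * K3 / 2)" by (simp add: power2_eq_square)
      also have "\<dots> \<le> s * ((2*\<eta>) * E\<^sup>2 * K3 / 2)" using s(3) s0 K20
        by (intro mult_left_mono divide_right_mono mult_right_mono) (auto simp: s_def)
      also have "\<dots> \<le> s * (\<kappa>/24)" using c2 s0 by (intro mult_left_mono) (auto simp: E_def K3_def algebra_simps)
      finally show ?thesis .
    qed
    have sq4: "s * (\<kappa>/24) + s * (\<kappa>/24) \<le> q/4"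
    proof -
      have "s * 1 \<le> s * e" using e1 s0 by (rule mult_left_mono)
      then have "s * \<kappa> \<le> s * e * \<kappa>" using kap by (simp add: mult_right_mono)
      then show ?thesis by (simp add: q_def mult.commute)
    qed
    have k2M: "k2 * M = \<theta>1 * (e * \<alpha>\<^sup>2 / (2*d)) * K2 + \<theta>1 * (\<omega>*E*\<alpha>\<^sup>2/2) * K2 + (s*E)\<^sup>2 * K3 / 2"
      by (simp add: k2_def P_def K2_def K3_def algebra_simps)
    have core: "1 + k1 * ((2*\<kappa>/3) * d) + k2 * M \<le> 1 - 3*q/4"
      using q1 k2M term1 term2 term3 sq4 by linarith
    have step1: "(\<integral>z. exp (\<theta>1 * gf \<omega> (d' z)) \<partial>Q) \<le> A * (1 - 3*q/4)"
    proof -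
      have "(A*k1)*(\<integral>z. c z \<bullet> v \<partial>Q) \<le> (A*k1)*((2*\<kappa>/3) * d)"
        using I1 A0 k1neg by (intro mult_left_mono_neg) (auto simp: mult_nonneg_nonpos)
      moreover have "(A*k2)*(\<integral>z. F z \<partial>Q) \<le> (A*k2)*M" using FM A0 k2pos by (intro mult_left_mono) auto
      ultimately have "(\<integral>z. exp (\<theta>1 * gf \<omega> (d' z)) \<partial>Q) \<le> A * (1 + k1 * ((2*\<kappa>/3) * d) + k2 * M)"
        using lhs_le by (simp add: algebra_simps)
      also have "\<dots> \<le> A * (1 - 3*q/4)" using core A0 by (intro mult_left_mono) auto
      finally show ?thesis .
    qed
    have tg: "(\<theta>1 - \<theta>0) * gf \<omega> d \<le> q/2"
    proof -
      have "(\<theta>1 - \<theta>0) * gf \<omega> d \<le> (\<theta>1 - \<theta>0) * (e / \<omega>)"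
        using gf_le_exp[OF om, of d] th by (intro mult_left_mono) (auto simp: e_def)
      also have "\<dots> = ((\<theta>1 - \<theta>0)/\<omega>) * e" by simp
      also have "\<dots> \<le> (\<eta>*\<kappa>/6) * e" using th(3) e1 by (intro mult_right_mono) auto
      also have "\<dots> \<le> (s*\<kappa>/6) * e" using s(2) kap e1 by (intro mult_right_mono) (auto simp: s_def)
      finally show ?thesis by (simp add: q_def mult_ac)
    qed
    have qge: "\<eta>*\<kappa>/3 \<le> q"
    proof -
      have "\<eta> * 1 \<le> s * e" using s(2) e1 s0 by (intro mult_mono) (auto simp: s_def)
      then show ?thesis using kap by (simp add: q_def divide_right_mono mult_right_mono)
    qed
    have step2: "A * (1 - 3*q/4) \<le> exp (-(\<eta>*\<kappa>/12)) * exp (\<theta>0 * gf \<omega> d)"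
    proof -
      have "A * (1 - 3*q/4) \<le> A * exp (-(3*q/4))"
        using A0 exp_ge_add_one_self[of "-(3*q/4)"] by (intro mult_left_mono) auto
      also have "\<dots> = exp (\<theta>0 * gf \<omega> d + (\<theta>1 - \<theta>0) * gf \<omega> d - 3*q/4)"
        by (simp add: A_def algebra_simps flip: exp_add)
      also have "\<dots> \<le> exp (\<theta>0 * gf \<omega> d - \<eta>*\<kappa>/12)" using tg qge by simp
      also have "\<dots> = exp (-(\<eta>*\<kappa>/12)) * exp (\<theta>0 * gf \<omega> d)" by (simp flip: exp_add)
      finally show ?thesis .
    qed
    have "(\<integral>\<^sup>+z. ennreal (exp (\<theta>1 * gf \<omega> (d' z))) \<partial>Q) = ennreal (\<integral>z. exp (\<theta>1 * gf \<omega> (d' z)) \<partial>Q)"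
      using lint by (simp add: nn_integral_eq_integral)
    also have "\<dots> \<le> ennreal (exp (-(\<eta>*\<kappa>/12)) * exp (\<theta>0 * gf \<omega> (infdist x S)) + exp (2*\<eta>*E*b) * M)"
    proof (intro ennreal_leI)
      have "0 \<le> exp (2*\<eta>*E*b) * M" using M by simp
      then show "(\<integral>z. exp (\<theta>1 * gf \<omega> (d' z)) \<partial>Q) \<le> exp (-(\<eta>*\<kappa>/12)) * exp (\<theta>0 * gf \<omega> (infdist x S)) + exp (2*\<eta>*E*b) * M"
        using step1 step2 unfolding d_def by linarith
    qed
    finally show ?thesis by (simp add: d'_def E_def b_def K2_def)
  qed
qed

lemma borel_measurable_vec_lambda:
  fixes g :: "'n::finite \<Rightarrow> 'a \<Rightarrow> real"
  assumes "\<And>i. g i \<in> borel_measurable M"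
  shows "(\<lambda>x. \<chi> i. g i x) \<in> borel_measurable M"
proof (rule iffD2[OF borel_measurable_euclidean_space], intro ballI)
  fix b :: "real^'n" assume "b \<in> Basis"
  then obtain j where b: "b = axis j 1" by (auto simp: Basis_vec_def)
  have "(\<lambda>x. (\<chi> i. g i x) \<bullet> b) = g j" unfolding b by (simp add: inner_axis fun_eq_iff)
  then show "(\<lambda>x. (\<chi> i. g i x) \<bullet> b) \<in> borel_measurable M" using assms by simp
qed

lemma sigma_gen_measurable:
  assumes Y: "\<And>i. i \<in> K \<Longrightarrow> W i \<in> measurable M N" and i: "i \<in> K"
  shows "W i \<in> measurable (sigma (space M) (\<Union>i\<in>K. {W i -` A \<inter> space M | A. A \<in> sets N})) N"
proof (rule measurableI)
  have sub: "(\<Union>i\<in>K. {W i -` A \<inter> space M | A. A \<in> sets N}) \<subseteq> Pow (space M)" by auto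
  fix x assume "x \<in> space (sigma (space M) (\<Union>i\<in>K. {W i -` A \<inter> space M | A. A \<in> sets N}))"
  then have "x \<in> space M" by (simp add: space_measure_of_conv)
  then show "W i x \<in> space N" using Y[OF i] by (auto dest: measurable_space)
next
  have sub: "(\<Union>i\<in>K. {W i -` A \<inter> space M | A. A \<in> sets N}) \<subseteq> Pow (space M)" by auto
  fix A assume "A \<in> sets N"
  then have "W i -` A \<inter> space M \<in> (\<Union>i\<in>K. {W i -` A \<inter> space M | A. A \<in> sets N})" using i by blast
  then show "W i -` A \<inter> space (sigma (space M) (\<Union>i\<in>K. {W i -` A \<inter> space M | A. A \<in> sets N}))
      \<in> sets (sigma (space M) (\<Union>i\<in>K. {W i -` A \<inter> space M | A. A \<in> sets N}))"
    using sub by (simp add: sets_measure_of sigma_sets.Basic)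
qed

lemma sigma_gen_sets_le:
  assumes Y: "\<And>i. i \<in> K \<Longrightarrow> W i \<in> measurable M N"
  shows "sets (sigma (space M) (\<Union>i\<in>K. {W i -` A \<inter> space M | A. A \<in> sets N})) \<subseteq> sets M"
proof -
  have sub: "(\<Union>i\<in>K. {W i -` A \<inter> space M | A. A \<in> sets N}) \<subseteq> sets M" using Y by auto
  have sub2: "(\<Union>i\<in>K. {W i -` A \<inter> space M | A. A \<in> sets N}) \<subseteq> Pow (space M)" by auto
  show ?thesis using sub sub2 by (simp add: sets_measure_of sets.sigma_sets_subset)
qed

lemma (in prob_space) indep_var_from_families:
  fixes W :: "'i \<Rightarrow> 'a \<Rightarrow> 'w"
  assumes ind: "indep_vars (\<lambda>_. N) W UNIV"
    and disj: "K1 \<inter> K2 = {}"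
    and Y1: "Y1 \<in> measurable (sigma (space M) (\<Union>i\<in>K1. {W i -` A \<inter> space M | A. A \<in> sets N})) M1"
    and Y2: "Y2 \<in> measurable (sigma (space M) (\<Union>i\<in>K2. {W i -` A \<inter> space M | A. A \<in> sets N})) M2"
  shows "Y1 \<in> measurable M M1" "Y2 \<in> measurable M M2"
    "\<forall>A\<in>sets M1. \<forall>B\<in>sets M2. prob ((Y1 -` A \<inter> space M) \<inter> (Y2 -` B \<inter> space M)) = prob (Y1 -` A \<inter> space M) * prob (Y2 -` B \<inter> space M)"
proof -
  define E where "E i = {W i -` A \<inter> space M | A. A \<in> sets N}" for i
  define I where "I b = (if b then K1 else K2)" for b
  have Wm: "W i \<in> measurable M N" for i using ind by (auto simp: indep_vars_def)
  have indE: "indep_sets E UNIV" using ind unfolding indep_vars_def2 E_def by auto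
  have Es: "indep_sets E (\<Union>j\<in>UNIV. I j)" by (rule indep_sets_mono_index[OF _ indE]) auto
  have IS: "Int_stable (E i)" for i
    unfolding E_def
  proof (safe intro!: Int_stableI)
    fix A B assume "A \<in> sets N" "B \<in> sets N"
    then show "\<exists>C. (W i -` A \<inter> space M) \<inter> (W i -` B \<inter> space M) = (W i -` C \<inter> space M) \<and> C \<in> sets N"
      by (intro exI[of _ "A \<inter> B"]) auto
  qed
  have dj: "disjoint_family_on I UNIV" using disj by (auto simp: disjoint_family_on_def I_def)
  have coll: "indep_sets (\<lambda>j. sigma_sets (space M) (\<Union>i\<in>I j. E i)) UNIV"
    by (rule indep_sets_collect_sigma[OF Es IS dj])
  have sub: "(\<Union>i\<in>K. E i) \<subseteq> Pow (space M)" for K by (auto simp: E_def)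
  have subalg: "subalgebra M (sigma (space M) (\<Union>i\<in>K. {W i -` A \<inter> space M | A. A \<in> sets N}))" for K
    unfolding subalgebra_def using sigma_gen_sets_le[of K W M N] Wm by (simp add: space_measure_of_conv)
  have Y1m: "Y1 \<in> measurable M M1" by (rule measurable_from_subalg[OF subalg Y1])
  have Y2m: "Y2 \<in> measurable M M2" by (rule measurable_from_subalg[OF subalg Y2])
  have s1: "sigma_sets (space M) {Y1 -` A \<inter> space M |A. A \<in> sets M1} \<subseteq> sigma_sets (space M) (\<Union>i\<in>I True. E i)"
  proof (rule sigma_sets_mono, safe)
    fix A assume "A \<in> sets M1"
    then have "Y1 -` A \<inter> space (sigma (space M) (\<Union>i\<in>K1. E i)) \<in> sets (sigma (space M) (\<Union>i\<in>K1. E i))"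
      using Y1 unfolding E_def by (rule measurable_sets[rotated])
    then show "Y1 -` A \<inter> space M \<in> sigma_sets (space M) (\<Union>i\<in>I True. E i)"
      using sub[of K1] by (simp add: I_def sets_measure_of)
  qed
  have s2: "sigma_sets (space M) {Y2 -` A \<inter> space M |A. A \<in> sets M2} \<subseteq> sigma_sets (space M) (\<Union>i\<in>I False. E i)"
  proof (rule sigma_sets_mono, safe)
    fix A assume "A \<in> sets M2"
    then have "Y2 -` A \<inter> space (sigma (space M) (\<Union>i\<in>K2. E i)) \<in> sets (sigma (space M) (\<Union>i\<in>K2. E i))"
      using Y2 unfolding E_def by (rule measurable_sets[rotated])
    then show "Y2 -` A \<inter> space M \<in> sigma_sets (space M) (\<Union>i\<in>I False. E i)"
      using sub[of K2] by (simp add: I_def sets_measure_of)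
  qed
  have "indep_set (sigma_sets (space M) {Y1 -` A \<inter> space M |A. A \<in> sets M1})
                  (sigma_sets (space M) {Y2 -` A \<inter> space M |A. A \<in> sets M2})"
    unfolding indep_set_def
    by (rule indep_sets_mono_sets[OF coll]) (use s1 s2 in \<open>auto split: bool.split\<close>)
  then show "\<forall>A\<in>sets M1. \<forall>B\<in>sets M2. prob ((Y1 -` A \<inter> space M) \<inter> (Y2 -` B \<inter> space M)) = prob (Y1 -` A \<inter> space M) * prob (Y2 -` B \<inter> space M)"
    unfolding indep_sets2_eq
  proof (intro ballI, elim conjE)
    fix A B assume A: "A \<in> sets M1" and B: "B \<in> sets M2"
      and pr: "\<forall>a\<in>sigma_sets (space M) {Y1 -` A \<inter> space M |A. A \<in> sets M1}.
        \<forall>b\<in>sigma_sets (space M) {Y2 -` A \<inter> space M |A. A \<in> sets M2}. prob (a \<inter> b) = prob a * prob b"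
    have a: "Y1 -` A \<inter> space M \<in> sigma_sets (space M) {Y1 -` A \<inter> space M |A. A \<in> sets M1}"
      using A by (intro sigma_sets.Basic) blast
    have b: "Y2 -` B \<inter> space M \<in> sigma_sets (space M) {Y2 -` A \<inter> space M |A. A \<in> sets M2}"
      using B by (intro sigma_sets.Basic) blast
    show "prob ((Y1 -` A \<inter> space M) \<inter> (Y2 -` B \<inter> space M)) = prob (Y1 -` A \<inter> space M) * prob (Y2 -` B \<inter> space M)"
      using pr a b by blast
  qed
  show "Y1 \<in> measurable M M1" "Y2 \<in> measurable M M2" by (fact Y1m Y2m)+
qed

lemma (in prob_space) distr_pair_indep:
  assumes X: "X \<in> measurable M S" and Y: "Y \<in> measurable M T"
    and ind: "\<forall>A\<in>sets S. \<forall>B\<in>sets T. prob ((X -` A \<inter> space M) \<inter> (Y -` B \<inter> space M)) = prob (X -` A \<inter> space M) * prob (Y -` B \<inter> space M)"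
  shows "distr M S X \<Otimes>\<^sub>M distr M T Y = distr M (S \<Otimes>\<^sub>M T) (\<lambda>x. (X x, Y x))"
proof -
  have XY: "(\<lambda>x. (X x, Y x)) \<in> measurable M (S \<Otimes>\<^sub>M T)" using X Y by (rule measurable_Pair)
  interpret X: prob_space "distr M S X" by (rule prob_space_distr) fact
  interpret Y: prob_space "distr M T Y" by (rule prob_space_distr) fact
  interpret XY: pair_prob_space "distr M S X" "distr M T Y" ..
  show ?thesis
  proof (rule pair_measure_eqI)
    show "sigma_finite_measure (distr M S X)" ..
    show "sigma_finite_measure (distr M T Y)" ..
    fix A B assume A: "A \<in> sets (distr M S X)" and B: "B \<in> sets (distr M T Y)"
    have "emeasure (distr M (S \<Otimes>\<^sub>M T) (\<lambda>x. (X x, Y x))) (A \<times> B) = emeasure M ((\<lambda>x. (X x, Y x)) -` (A \<times> B) \<inter> space M)"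
      using A B by (intro emeasure_distr[OF XY]) auto
    also have "(\<lambda>x. (X x, Y x)) -` (A \<times> B) \<inter> space M = (X -` A \<inter> space M) \<inter> (Y -` B \<inter> space M)" by auto
    also have "emeasure M \<dots> = emeasure M (X -` A \<inter> space M) * emeasure M (Y -` B \<inter> space M)"
      using ind A B by (simp add: emeasure_eq_measure measure_nonneg ennreal_mult)
    also have "\<dots> = emeasure (distr M S X) A * emeasure (distr M T Y) B"
      using X Y A B by (simp add: emeasure_distr)
    finally show "emeasure (distr M S X) A * emeasure (distr M T Y) B = emeasure (distr M (S \<Otimes>\<^sub>M T) (\<lambda>x. (X x, Y x))) (A \<times> B)" by simp
  qed simp
qed

locale kwb =
  fixes X :: "(real^'n) set" and P :: "'o measure" and N D :: "'w measure"
    and l :: "real^'n \<Rightarrow> 'w \<Rightarrow> real" and Wp Wm :: "nat \<Rightarrow> 'o \<Rightarrow> 'w"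
    and x0 :: "real^'n" and \<nu> :: real and \<alpha> :: "nat \<Rightarrow> real"
  assumes X: "X \<noteq> {}" "closed X" "convex X"
    and P: "prob_space P"
    and Wmeas: "\<And>t. Wp t \<in> measurable P N" "\<And>t. Wm t \<in> measurable P N"
    and Wdist: "\<And>t. distr P N (Wp t) = D" "\<And>t. distr P N (Wm t) = D"
    and Windep: "prob_space.indep_vars P (\<lambda>_. N)
                   (\<lambda>i. case i of Inl t \<Rightarrow> Wp t | Inr t \<Rightarrow> Wm t) (UNIV :: (nat + nat) set)"
    and lmeas: "(\<lambda>(y, w). l y w) \<in> borel_measurable (borel \<Otimes>\<^sub>M N)"
    and x0: "x0 \<in> X"
begin

abbreviation xt where "xt t \<equiv> kw_iter X l \<nu> \<alpha> x0 Wp Wm t"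

definition W where "W i = (case i of Inl t \<Rightarrow> Wp t | Inr t \<Rightarrow> Wm t)"

definition Fam where "Fam K = sigma (space P) (\<Union>i\<in>K. {W i -` A \<inter> space P | A. A \<in> sets N})"

lemma Wm_meas: "W i \<in> measurable P N" by (cases i) (auto simp: W_def Wmeas)

lemma Dsets: "sets D = sets N" using Wdist(1)[of 0] by (metis sets_distr)

lemma D_prob: "prob_space D"
  using Wdist(1)[of 0] prob_space.prob_space_distr[OF P Wmeas(1)[of 0]] by simp

lemma l_comp_meas:
  assumes "f \<in> borel_measurable M" "g \<in> measurable M N"
  shows "(\<lambda>x. l (f x) (g x)) \<in> borel_measurable M"
  using measurable_Pair_compose_split[OF lmeas assms] .

lemma kw_dir_meas:
  "(\<lambda>p. kw_dir l \<nu> (fst p) (fst (snd p)) (snd (snd p))) \<in> borel_measurable (borel \<Otimes>\<^sub>M (N \<Otimes>\<^sub>M N))"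
proof -
  have c1: "(\<lambda>p::(real^'n) \<times> ('w \<times> 'w). l (fst p + s *\<^sub>R axis i 1) (fst (snd p))) \<in> borel_measurable (borel \<Otimes>\<^sub>M (N \<Otimes>\<^sub>M N))" for s i
    by (rule l_comp_meas) measurable
  have c2: "(\<lambda>p::(real^'n) \<times> ('w \<times> 'w). l (fst p + s *\<^sub>R axis i 1) (snd (snd p))) \<in> borel_measurable (borel \<Otimes>\<^sub>M (N \<Otimes>\<^sub>M N))" for s i
    by (rule l_comp_meas) measurable
  have "(\<lambda>p::(real^'n) \<times> ('w \<times> 'w). lvec l (fst p) s (fst (snd p))) \<in> borel_measurable (borel \<Otimes>\<^sub>M (N \<Otimes>\<^sub>M N))" for s
    unfolding lvec_def by (rule borel_measurable_vec_lambda) (rule c1)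
  moreover have "(\<lambda>p::(real^'n) \<times> ('w \<times> 'w). lvec l (fst p) s (snd (snd p))) \<in> borel_measurable (borel \<Otimes>\<^sub>M (N \<Otimes>\<^sub>M N))" for s
    unfolding lvec_def by (rule borel_measurable_vec_lambda) (rule c2)
  ultimately show ?thesis unfolding kw_dir_def by measurable
qed

lemma step_meas:
  "(\<lambda>p. closest_point X (fst p - a *\<^sub>R kw_dir l \<nu> (fst p) (fst (snd p)) (snd (snd p)))) \<in> borel_measurable (borel \<Otimes>\<^sub>M (N \<Otimes>\<^sub>M N))"
proof -
  have "(\<lambda>p. fst p - a *\<^sub>R kw_dir l \<nu> (fst p) (fst (snd p)) (snd (snd p))) \<in> borel_measurable (borel \<Otimes>\<^sub>M (N \<Otimes>\<^sub>M N))"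
    using kw_dir_meas by measurable
  then show ?thesis
    by (rule borel_measurable_continuous_on[OF continuous_on_closest_point[OF X(3,2,1)]])
qed

lemma iter_meas:
  assumes "\<And>s. s < t \<Longrightarrow> Wp s \<in> measurable F N" "\<And>s. s < t \<Longrightarrow> Wm s \<in> measurable F N"
  shows "xt t \<in> borel_measurable F"
  using assms
proof (induction t)
  case 0 then show ?case by simp
next
  case (Suc t)
  have ih: "xt t \<in> borel_measurable F" using Suc by auto
  have pm: "(\<lambda>\<omega>. (xt t \<omega>, (Wp t \<omega>, Wm t \<omega>))) \<in> measurable F (borel \<Otimes>\<^sub>M (N \<Otimes>\<^sub>M N))"
    using ih Suc.prems by (auto intro!: measurable_Pair)
  have "(\<lambda>\<omega>. closest_point X (fst (xt t \<omega>, (Wp t \<omega>, Wm t \<omega>)) - \<alpha> t *\<^sub>R kw_dir l \<nu> (fst (xt t \<omega>, (Wp t \<omega>, Wm t \<omega>)))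
          (fst (snd (xt t \<omega>, (Wp t \<omega>, Wm t \<omega>)))) (snd (snd (xt t \<omega>, (Wp t \<omega>, Wm t \<omega>)))))) \<in> borel_measurable F"
    by (rule measurable_compose[OF pm step_meas])
  then show ?case by simp
qed

lemma xt_meas: "xt t \<in> borel_measurable P"
  by (rule iter_meas) (auto simp: Wmeas)

lemma xt_in_X: "xt t \<omega> \<in> X"
  by (cases t) (auto simp: x0 closest_point_in_set X)

lemma Fam_meas: "i \<in> K \<Longrightarrow> W i \<in> measurable (Fam K) N"
  unfolding Fam_def by (rule sigma_gen_measurable[OF Wm_meas])

lemma xt_Fam_meas: "xt t \<in> borel_measurable (Fam (Inl ` {..<t} \<union> Inr ` {..<t}))"
proof (rule iter_meas)
  fix s assume "s < t"
  then show "Wp s \<in> measurable (Fam (Inl ` {..<t} \<union> Inr ` {..<t})) N"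
    "Wm s \<in> measurable (Fam (Inl ` {..<t} \<union> Inr ` {..<t})) N"
    using Fam_meas[of "Inl s"] Fam_meas[of "Inr s"] by (auto simp: W_def)
qed

lemma kw_filt_eq: "kw_filt P N Wp Wm t = Fam (Inl ` {..<t} \<union> Inr ` {..<t})"
  unfolding kw_filt_def Fam_def
  by (rule arg_cong[where f="sigma (space P)"]) (auto simp: W_def)

lemma xt_filt_meas: "xt t \<in> borel_measurable (kw_filt P N Wp Wm t)"
  using xt_Fam_meas kw_filt_eq by simp

lemma Fam_subalg: "subalgebra P (Fam K)"
proof -
  have "sets (Fam K) \<subseteq> sets P" unfolding Fam_def by (rule sigma_gen_sets_le[OF Wm_meas])
  moreover have "space (Fam K) = space P" by (simp add: Fam_def space_measure_of_conv)
  ultimately show ?thesis by (simp add: subalgebra_def)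
qed

lemma filt_subalg: "subalgebra P (kw_filt P N Wp Wm t)"
  unfolding kw_filt_eq by (rule Fam_subalg)

lemma indep_xt_Z: "prob_space.prob P ((xt t -` A \<inter> space P) \<inter> ((\<lambda>\<omega>. (Wp t \<omega>, Wm t \<omega>)) -` B \<inter> space P))
   = prob_space.prob P (xt t -` A \<inter> space P) * prob_space.prob P ((\<lambda>\<omega>. (Wp t \<omega>, Wm t \<omega>)) -` B \<inter> space P)"
  if "A \<in> sets borel" "B \<in> sets (N \<Otimes>\<^sub>M N)"
proof -
  interpret prob_space P by (rule P)
  have ind: "indep_vars (\<lambda>_. N) W UNIV" using Windep unfolding W_def by simp
  have Z: "(\<lambda>\<omega>. (Wp t \<omega>, Wm t \<omega>)) \<in> measurable (Fam {Inl t, Inr t}) (N \<Otimes>\<^sub>M N)"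
    using Fam_meas[of "Inl t" "{Inl t, Inr t}"] Fam_meas[of "Inr t" "{Inl t, Inr t}"]
    by (auto simp: W_def intro!: measurable_Pair)
  have "(Inl ` {..<t} \<union> Inr ` {..<t}) \<inter> {Inl t, Inr t} = {}" by auto
  note r = indep_var_from_families[OF ind this xt_Fam_meas[unfolded Fam_def] Z[unfolded Fam_def]]
  show ?thesis using r(3) that by auto
qed

lemma distr_xt_Z: "distr P borel (xt t) \<Otimes>\<^sub>M distr P (N \<Otimes>\<^sub>M N) (\<lambda>\<omega>. (Wp t \<omega>, Wm t \<omega>))
   = distr P (borel \<Otimes>\<^sub>M (N \<Otimes>\<^sub>M N)) (\<lambda>\<omega>. (xt t \<omega>, (Wp t \<omega>, Wm t \<omega>)))"
proof -
  interpret prob_space P by (rule P)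
  have Zm: "(\<lambda>\<omega>. (Wp t \<omega>, Wm t \<omega>)) \<in> measurable P (N \<Otimes>\<^sub>M N)"
    using Wmeas by (auto intro!: measurable_Pair)
  show ?thesis by (rule distr_pair_indep[OF xt_meas Zm]) (use indep_xt_Z in auto)
qed

lemma distr_Z: "distr P (N \<Otimes>\<^sub>M N) (\<lambda>\<omega>. (Wp t \<omega>, Wm t \<omega>)) = D \<Otimes>\<^sub>M D"
proof -
  interpret prob_space P by (rule P)
  have ind: "indep_vars (\<lambda>_. N) W UNIV" using Windep unfolding W_def by simp
  have dj: "{Inl t} \<inter> {Inr t} = {}" by auto
  note r = indep_var_from_families[OF ind dj Fam_meas[of "Inl t" "{Inl t}", unfolded Fam_def]
      Fam_meas[of "Inr t" "{Inr t}", unfolded Fam_def]]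
  have "distr P N (Wp t) \<Otimes>\<^sub>M distr P N (Wm t) = distr P (N \<Otimes>\<^sub>M N) (\<lambda>\<omega>. (Wp t \<omega>, Wm t \<omega>))"
    by (rule distr_pair_indep[OF Wmeas]) (use r in \<open>auto simp: W_def\<close>)
  then show ?thesis using Wdist by simp
qed

lemma freeze:
  assumes f[measurable]: "f \<in> borel_measurable (borel \<Otimes>\<^sub>M (N \<Otimes>\<^sub>M N))"
  shows "(\<integral>\<^sup>+\<omega>. f (xt t \<omega>, (Wp t \<omega>, Wm t \<omega>)) \<partial>P) = (\<integral>\<^sup>+\<omega>. (\<integral>\<^sup>+z. f (xt t \<omega>, z) \<partial>(D \<Otimes>\<^sub>M D)) \<partial>P)"
proof -
  interpret P: prob_space P by (rule P)
  interpret Dp: prob_space D by (rule D_prob)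
  interpret DD: pair_prob_space D D ..
  define Lx where "Lx = distr P borel (xt t)"
  interpret Lx: prob_space Lx unfolding Lx_def by (rule P.prob_space_distr[OF xt_meas])
  interpret LD: pair_prob_space Lx "D \<Otimes>\<^sub>M D" ..
  have Zm[measurable]: "(\<lambda>\<omega>. (Wp t \<omega>, Wm t \<omega>)) \<in> measurable P (N \<Otimes>\<^sub>M N)"
    using Wmeas by (auto intro!: measurable_Pair)
  have xtm[measurable]: "xt t \<in> borel_measurable P" by (rule xt_meas)
  have j: "Lx \<Otimes>\<^sub>M (D \<Otimes>\<^sub>M D) = distr P (borel \<Otimes>\<^sub>M (N \<Otimes>\<^sub>M N)) (\<lambda>\<omega>. (xt t \<omega>, (Wp t \<omega>, Wm t \<omega>)))"
    using distr_xt_Z[of t] distr_Z[of t] unfolding Lx_def by simp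
  have setsLD: "sets (Lx \<Otimes>\<^sub>M (D \<Otimes>\<^sub>M D)) = sets (borel \<Otimes>\<^sub>M (N \<Otimes>\<^sub>M N))"
    by (intro sets_pair_measure_cong) (auto simp: Lx_def Dsets)
  have fLD: "f \<in> borel_measurable (Lx \<Otimes>\<^sub>M (D \<Otimes>\<^sub>M D))"
    by (subst measurable_cong_sets[OF setsLD refl]) (rule assms)
  have "(\<integral>\<^sup>+\<omega>. f (xt t \<omega>, (Wp t \<omega>, Wm t \<omega>)) \<partial>P)
      = (\<integral>\<^sup>+p. f p \<partial>distr P (borel \<Otimes>\<^sub>M (N \<Otimes>\<^sub>M N)) (\<lambda>\<omega>. (xt t \<omega>, (Wp t \<omega>, Wm t \<omega>))))"
    by (rule nn_integral_distr[symmetric]) auto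
  also have "\<dots> = (\<integral>\<^sup>+p. f p \<partial>(Lx \<Otimes>\<^sub>M (D \<Otimes>\<^sub>M D)))" by (simp add: j)
  also have "\<dots> = (\<integral>\<^sup>+x. (\<integral>\<^sup>+z. f (x, z) \<partial>(D \<Otimes>\<^sub>M D)) \<partial>Lx)"
    by (rule sigma_finite_measure.nn_integral_fst[symmetric, OF DD.P.sigma_finite_measure_axioms fLD])
  also have "\<dots> = (\<integral>\<^sup>+\<omega>. (\<integral>\<^sup>+z. f (xt t \<omega>, z) \<partial>(D \<Otimes>\<^sub>M D)) \<partial>P)"
    unfolding Lx_def
  proof (rule nn_integral_distr[OF xtm])
    have "(\<lambda>x. \<integral>\<^sup>+z. f (x, z) \<partial>(D \<Otimes>\<^sub>M D)) \<in> borel_measurable Lx"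
      by (rule sigma_finite_measure.borel_measurable_nn_integral_fst[OF DD.P.sigma_finite_measure_axioms fLD])
    then show "(\<lambda>x. \<integral>\<^sup>+z. f (x, z) \<partial>(D \<Otimes>\<^sub>M D)) \<in> borel_measurable (distr P borel (xt t))"
      by (simp add: Lx_def)
  qed
  finally show ?thesis .
qed

end

lemma distr_snd_prob:
  assumes M: "prob_space M" and N: "prob_space N"
  shows "distr (M \<Otimes>\<^sub>M N) N snd = N"
proof (intro measure_eqI)
  interpret M: prob_space M by fact
  interpret N: prob_space N by fact
  interpret pair_prob_space M N ..
  fix A assume A: "A \<in> sets (distr (M \<Otimes>\<^sub>M N) N snd)"
  from A have "emeasure (distr (M \<Otimes>\<^sub>M N) N snd) A = emeasure (M \<Otimes>\<^sub>M N) (space M \<times> A)"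
    by (auto simp add: emeasure_distr space_pair_measure dest: sets.sets_into_space intro!: arg_cong2[where f=emeasure])
  with A show "emeasure (distr (M \<Otimes>\<^sub>M N) N snd) A = emeasure N A"
    using A by (simp add: N.emeasure_pair_measure_Times M.emeasure_space_1)
qed simp

context kwb
begin

lemma DD_prob: "prob_space (D \<Otimes>\<^sub>M D)"
  using D_prob by (intro prob_space_pair)

lemma int_fst:
  fixes f :: "'w \<Rightarrow> real"
  assumes "integrable D f"
  shows "integrable (D \<Otimes>\<^sub>M D) (\<lambda>z. f (fst z))" "(\<integral>z. f (fst z) \<partial>(D \<Otimes>\<^sub>M D)) = (\<integral>w. f w \<partial>D)"
proof -
  have d: "distr (D \<Otimes>\<^sub>M D) D fst = D" using prob_space.distr_pair_fst[OF D_prob] .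
  have fm: "f \<in> borel_measurable D" using assms by auto
  show "integrable (D \<Otimes>\<^sub>M D) (\<lambda>z. f (fst z))"
    using integrable_distr_eq[of fst "D \<Otimes>\<^sub>M D" D f] assms fm d by simp
  show "(\<integral>z. f (fst z) \<partial>(D \<Otimes>\<^sub>M D)) = (\<integral>w. f w \<partial>D)"
    using integral_distr[of fst "D \<Otimes>\<^sub>M D" D f] fm d by simp
qed

lemma int_snd:
  fixes f :: "'w \<Rightarrow> real"
  assumes "integrable D f"
  shows "integrable (D \<Otimes>\<^sub>M D) (\<lambda>z. f (snd z))" "(\<integral>z. f (snd z) \<partial>(D \<Otimes>\<^sub>M D)) = (\<integral>w. f w \<partial>D)"
proof -
  have d: "distr (D \<Otimes>\<^sub>M D) D snd = D" using distr_snd_prob[OF D_prob D_prob] .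
  have fm: "f \<in> borel_measurable D" using assms by auto
  show "integrable (D \<Otimes>\<^sub>M D) (\<lambda>z. f (snd z))"
    using integrable_distr_eq[of snd "D \<Otimes>\<^sub>M D" D f] assms fm d by simp
  show "(\<integral>z. f (snd z) \<partial>(D \<Otimes>\<^sub>M D)) = (\<integral>w. f w \<partial>D)"
    using integral_distr[of snd "D \<Otimes>\<^sub>M D" D f] fm d by simp
qed

lemma mean_formula:
  assumes lint: "\<And>y. integrable D (l y)"
  shows "(\<integral>z. kw_dir l \<nu> x (fst z) (snd z) \<bullet> v \<partial>(D \<Otimes>\<^sub>M D))
     = ((1 / (2 * \<nu>)) *\<^sub>R (\<chi> i. lmean D l (x + \<nu> *\<^sub>R axis i 1) - lmean D l (x - \<nu> *\<^sub>R axis i 1))) \<bullet> v"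
proof -
  define a where "a i = l (x + \<nu> *\<^sub>R axis i 1)" for i
  define b where "b i = l (x - \<nu> *\<^sub>R axis i 1)" for i
  have eq: "kw_dir l \<nu> x w w' \<bullet> v = (\<Sum>i\<in>UNIV. (1 / (2 * \<nu>)) * v $ i * a i w - (1 / (2 * \<nu>)) * v $ i * b i w')" for w w'
    by (simp add: kw_dir_def lvec_def inner_vec_def a_def b_def algebra_simps sum_subtractf)
  have ia: "integrable (D \<Otimes>\<^sub>M D) (\<lambda>z. (1 / (2 * \<nu>)) * v $ i * a i (fst z))" for i
    using int_fst(1)[OF lint[of "x + \<nu> *\<^sub>R axis i 1"]] by (simp add: a_def)
  have ib: "integrable (D \<Otimes>\<^sub>M D) (\<lambda>z. (1 / (2 * \<nu>)) * v $ i * b i (snd z))" for i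
    using int_snd(1)[OF lint[of "x - \<nu> *\<^sub>R axis i 1"]] by (simp add: b_def)
  have "(\<integral>z. kw_dir l \<nu> x (fst z) (snd z) \<bullet> v \<partial>(D \<Otimes>\<^sub>M D))
      = (\<integral>z. (\<Sum>i\<in>UNIV. (1 / (2 * \<nu>)) * v $ i * a i (fst z) - (1 / (2 * \<nu>)) * v $ i * b i (snd z)) \<partial>(D \<Otimes>\<^sub>M D))"
    by (simp add: eq)
  also have "\<dots> = (\<Sum>i\<in>UNIV. (\<integral>z. (1 / (2 * \<nu>)) * v $ i * a i (fst z) - (1 / (2 * \<nu>)) * v $ i * b i (snd z) \<partial>(D \<Otimes>\<^sub>M D)))"
    using ia ib by (intro Bochner_Integration.integral_sum) auto
  also have "\<dots> = (\<Sum>i\<in>UNIV. (1 / (2 * \<nu>)) * v $ i * lmean D l (x + \<nu> *\<^sub>R axis i 1) - (1 / (2 * \<nu>)) * v $ i * lmean D l (x - \<nu> *\<^sub>R axis i 1))"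
  proof (rule sum.cong[OF refl])
    fix i
    have "(\<integral>z. (1 / (2 * \<nu>)) * v $ i * a i (fst z) - (1 / (2 * \<nu>)) * v $ i * b i (snd z) \<partial>(D \<Otimes>\<^sub>M D))
        = (\<integral>z. (1 / (2 * \<nu>)) * v $ i * a i (fst z) \<partial>(D \<Otimes>\<^sub>M D)) - (\<integral>z. (1 / (2 * \<nu>)) * v $ i * b i (snd z) \<partial>(D \<Otimes>\<^sub>M D))"
      using ia ib by (rule Bochner_Integration.integral_diff)
    also have "\<dots> = (1 / (2 * \<nu>)) * v $ i * (\<integral>z. a i (fst z) \<partial>(D \<Otimes>\<^sub>M D)) - (1 / (2 * \<nu>)) * v $ i * (\<integral>z. b i (snd z) \<partial>(D \<Otimes>\<^sub>M D))"
      by simp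
    also have "\<dots> = (1 / (2 * \<nu>)) * v $ i * lmean D l (x + \<nu> *\<^sub>R axis i 1) - (1 / (2 * \<nu>)) * v $ i * lmean D l (x - \<nu> *\<^sub>R axis i 1)"
      using int_fst(2)[OF lint[of "x + \<nu> *\<^sub>R axis i 1"]] int_snd(2)[OF lint[of "x - \<nu> *\<^sub>R axis i 1"]]
      by (simp add: a_def b_def lmean_def)
    finally show "(\<integral>z. (1 / (2 * \<nu>)) * v $ i * a i (fst z) - (1 / (2 * \<nu>)) * v $ i * b i (snd z) \<partial>(D \<Otimes>\<^sub>M D)) = \<dots>" .
  qed
  also have "\<dots> = ((1 / (2 * \<nu>)) *\<^sub>R (\<chi> i. lmean D l (x + \<nu> *\<^sub>R axis i 1) - lmean D l (x - \<nu> *\<^sub>R axis i 1))) \<bullet> v"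
    by (simp add: inner_vec_def algebra_simps sum_subtractf)
  finally show ?thesis .
qed

end

context kwb
begin

definition psi where "psi lam x = (\<integral>\<^sup>+z. ennreal (exp (lam * norm (kw_dir l \<nu> x (fst z) (snd z)))) \<partial>(D \<Otimes>\<^sub>M D))"

lemma sets_DD: "sets (borel \<Otimes>\<^sub>M (D \<Otimes>\<^sub>M D)) = sets (borel \<Otimes>\<^sub>M (N \<Otimes>\<^sub>M N))"
  by (intro sets_pair_measure_cong) (auto simp: Dsets)

lemma kw_dir_meas_D: "(\<lambda>p. kw_dir l \<nu> (fst p) (fst (snd p)) (snd (snd p))) \<in> borel_measurable (borel \<Otimes>\<^sub>M (D \<Otimes>\<^sub>M D))"
  by (subst measurable_cong_sets[OF sets_DD refl]) (rule kw_dir_meas)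

lemma psi_meas: "psi lam \<in> borel_measurable borel"
proof -
  interpret DD: prob_space "D \<Otimes>\<^sub>M D" by (rule DD_prob)
  have "(\<lambda>p. ennreal (exp (lam * norm (kw_dir l \<nu> (fst p) (fst (snd p)) (snd (snd p)))))) \<in> borel_measurable (borel \<Otimes>\<^sub>M (D \<Otimes>\<^sub>M D))"
    using kw_dir_meas_D by measurable
  from DD.borel_measurable_nn_integral_fst[OF this]
  have "(\<lambda>x. \<integral>\<^sup>+ y. ennreal (exp (lam * norm (kw_dir l \<nu> x (fst y) (snd y)))) \<partial>(D \<Otimes>\<^sub>M D)) \<in> borel_measurable borel" by simp
  moreover have "psi lam = (\<lambda>x. \<integral>\<^sup>+ y. ennreal (exp (lam * norm (kw_dir l \<nu> x (fst y) (snd y)))) \<partial>(D \<Otimes>\<^sub>M D))"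
    by (rule ext) (simp add: psi_def)
  ultimately show ?thesis by simp
qed

lemma moment_AE:
  assumes D2t: "AE \<omega> in P. nn_cond_exp P (kw_filt P N Wp Wm t) (\<lambda>\<omega>. ennreal (exp (lam * norm (kw_dir l \<nu> (xt t \<omega>) (Wp t \<omega>) (Wm t \<omega>))))) \<omega> \<le> ennreal M"
  shows "AE \<omega> in P. psi lam (xt t \<omega>) \<le> ennreal M"
proof -
  interpret P: prob_space P by (rule P)
  define F where "F = kw_filt P N Wp Wm t"
  have subF: "subalgebra P F" unfolding F_def by (rule filt_subalg)
  have "finite_measure_subalgebra P F"
    unfolding finite_measure_subalgebra_def finite_measure_subalgebra_axioms_def
    using P.finite_measure_axioms subF by simp
  then have sfs: "sigma_finite_subalgebra P F" by (rule finite_measure_subalgebra_is_sigma_finite)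
  have spF: "space F = space P" using subF by (simp add: subalgebra_def)
  define B where "B = {\<omega> \<in> space P. ennreal M < psi lam (xt t \<omega>)}"
  have psixF[measurable]: "(\<lambda>\<omega>. psi lam (xt t \<omega>)) \<in> borel_measurable F"
    using measurable_compose[OF xt_filt_meas psi_meas] by (simp add: F_def)
  have BF: "B \<in> sets F"
  proof -
    have "{\<omega> \<in> space F. ennreal M < psi lam (xt t \<omega>)} \<in> sets F" by measurable
    then show ?thesis by (simp add: B_def spF)
  qed
  have BP: "B \<in> sets P" using BF subF by (auto simp: subalgebra_def)
  have indF: "(\<lambda>\<omega>. indicator B \<omega> :: ennreal) \<in> borel_measurable F" using BF by simp
  have Zm[measurable]: "(\<lambda>\<omega>. (Wp t \<omega>, Wm t \<omega>)) \<in> measurable P (N \<Otimes>\<^sub>M N)"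
    using Wmeas by (auto intro!: measurable_Pair)
  have xtm[measurable]: "xt t \<in> borel_measurable P" by (rule xt_meas)
  have Km: "(\<lambda>p. kw_dir l \<nu> (fst p) (fst (snd p)) (snd (snd p))) \<in> borel_measurable (borel \<Otimes>\<^sub>M (N \<Otimes>\<^sub>M N))"
    by (rule kw_dir_meas)
  have gm: "(\<lambda>\<omega>. ennreal (exp (lam * norm (kw_dir l \<nu> (xt t \<omega>) (Wp t \<omega>) (Wm t \<omega>))))) \<in> borel_measurable P"
  proof -
    have "(\<lambda>\<omega>. kw_dir l \<nu> (fst (xt t \<omega>, (Wp t \<omega>, Wm t \<omega>))) (fst (snd (xt t \<omega>, (Wp t \<omega>, Wm t \<omega>)))) (snd (snd (xt t \<omega>, (Wp t \<omega>, Wm t \<omega>))))) \<in> borel_measurable P"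
      by (rule measurable_compose[OF _ Km]) (auto intro!: measurable_Pair)
    then show ?thesis by simp
  qed
  have eq1: "(\<integral>\<^sup>+\<omega>. indicator B \<omega> * nn_cond_exp P F (\<lambda>\<omega>. ennreal (exp (lam * norm (kw_dir l \<nu> (xt t \<omega>) (Wp t \<omega>) (Wm t \<omega>))))) \<omega> \<partial>P)
      = (\<integral>\<^sup>+\<omega>. indicator B \<omega> * ennreal (exp (lam * norm (kw_dir l \<nu> (xt t \<omega>) (Wp t \<omega>) (Wm t \<omega>)))) \<partial>P)"
    by (rule sigma_finite_subalgebra.nn_cond_exp_intg[OF sfs indF gm])
  have le1: "(\<integral>\<^sup>+\<omega>. indicator B \<omega> * nn_cond_exp P F (\<lambda>\<omega>. ennreal (exp (lam * norm (kw_dir l \<nu> (xt t \<omega>) (Wp t \<omega>) (Wm t \<omega>))))) \<omega> \<partial>P)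
      \<le> (\<integral>\<^sup>+\<omega>. indicator B \<omega> * ennreal M \<partial>P)"
    using D2t unfolding F_def by (intro nn_integral_mono_AE) (auto elim!: eventually_mono intro: mult_left_mono)
  define fB where "fB p = indicator {x. ennreal M < psi lam x} (fst p) * ennreal (exp (lam * norm (kw_dir l \<nu> (fst p) (fst (snd p)) (snd (snd p)))))" for p
  have psim[measurable]: "psi lam \<in> borel_measurable borel" by (rule psi_meas)
  have fBm: "fB \<in> borel_measurable (borel \<Otimes>\<^sub>M (N \<Otimes>\<^sub>M N))"
  proof -
    have s: "{x. ennreal M < psi lam x} \<in> sets borel" by measurable
    have "(\<lambda>p. indicator {x. ennreal M < psi lam x} (fst p) :: ennreal) \<in> borel_measurable (borel \<Otimes>\<^sub>M (N \<Otimes>\<^sub>M N))"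
      using s by measurable
    moreover have "(\<lambda>p. ennreal (exp (lam * norm (kw_dir l \<nu> (fst p) (fst (snd p)) (snd (snd p)))))) \<in> borel_measurable (borel \<Otimes>\<^sub>M (N \<Otimes>\<^sub>M N))"
      using Km by measurable
    ultimately show ?thesis unfolding fB_def by (rule borel_measurable_times_ennreal)
  qed
  have "(\<integral>\<^sup>+\<omega>. indicator B \<omega> * ennreal (exp (lam * norm (kw_dir l \<nu> (xt t \<omega>) (Wp t \<omega>) (Wm t \<omega>)))) \<partial>P)
      = (\<integral>\<^sup>+\<omega>. fB (xt t \<omega>, (Wp t \<omega>, Wm t \<omega>)) \<partial>P)"
    by (rule nn_integral_cong) (simp add: fB_def B_def indicator_def)
  also have "\<dots> = (\<integral>\<^sup>+\<omega>. (\<integral>\<^sup>+z. fB (xt t \<omega>, z) \<partial>(D \<Otimes>\<^sub>M D)) \<partial>P)"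
    by (rule freeze[OF fBm])
  also have "\<dots> = (\<integral>\<^sup>+\<omega>. indicator B \<omega> * psi lam (xt t \<omega>) \<partial>P)"
  proof (rule nn_integral_cong)
    fix \<omega> assume \<omega>: "\<omega> \<in> space P"
    have mz: "(\<lambda>z. ennreal (exp (lam * norm (kw_dir l \<nu> (xt t \<omega>) (fst z) (snd z))))) \<in> borel_measurable (D \<Otimes>\<^sub>M D)"
    proof -
      have "(\<lambda>p. kw_dir l \<nu> (fst p) (fst (snd p)) (snd (snd p))) \<circ> (\<lambda>z. (xt t \<omega>, z)) \<in> borel_measurable (D \<Otimes>\<^sub>M D)"
        by (rule measurable_comp[OF _ kw_dir_meas_D]) simp
      then have "(\<lambda>z. kw_dir l \<nu> (xt t \<omega>) (fst z) (snd z)) \<in> borel_measurable (D \<Otimes>\<^sub>M D)" by (simp add: o_def)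
      then show ?thesis by measurable
    qed
    have "(\<integral>\<^sup>+z. fB (xt t \<omega>, z) \<partial>(D \<Otimes>\<^sub>M D)) = (\<integral>\<^sup>+z. indicator {x. ennreal M < psi lam x} (xt t \<omega>) * ennreal (exp (lam * norm (kw_dir l \<nu> (xt t \<omega>) (fst z) (snd z)))) \<partial>(D \<Otimes>\<^sub>M D))"
      by (simp add: fB_def)
    also have "\<dots> = indicator {x. ennreal M < psi lam x} (xt t \<omega>) * psi lam (xt t \<omega>)"
      unfolding psi_def by (rule nn_integral_cmult[OF mz])
    finally have "(\<integral>\<^sup>+z. fB (xt t \<omega>, z) \<partial>(D \<Otimes>\<^sub>M D)) = indicator {x. ennreal M < psi lam x} (xt t \<omega>) * psi lam (xt t \<omega>)" .
    then show "(\<integral>\<^sup>+z. fB (xt t \<omega>, z) \<partial>(D \<Otimes>\<^sub>M D)) = indicator B \<omega> * psi lam (xt t \<omega>)"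
      using \<omega> by (simp add: B_def indicator_def)
  qed
  finally have Ieq: "(\<integral>\<^sup>+\<omega>. indicator B \<omega> * psi lam (xt t \<omega>) \<partial>P) \<le> (\<integral>\<^sup>+\<omega>. indicator B \<omega> * ennreal M \<partial>P)"
    using eq1 le1 by simp
  show ?thesis
  proof (cases "emeasure P B = 0")
    case True
    then have "B \<in> null_sets P" using BP by (simp add: null_sets_def)
    then show ?thesis by (rule AE_I') (auto simp: B_def not_le)
  next
    case False
    have m1: "(\<lambda>\<omega>. indicator B \<omega> * ennreal M) \<in> borel_measurable P" using BP by simp
    have m2: "(\<lambda>\<omega>. indicator B \<omega> * psi lam (xt t \<omega>)) \<in> borel_measurable P"
      using BP measurable_compose[OF xtm psi_meas] by simp
    have fin: "(\<integral>\<^sup>+\<omega>. indicator B \<omega> * ennreal M \<partial>P) \<noteq> \<infinity>"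
      using BP by (simp add: nn_integral_cmult_indicator mult.commute ennreal_mult_eq_top_iff P.emeasure_finite)
    have ae1: "AE \<omega> in P. indicator B \<omega> * ennreal M \<le> indicator B \<omega> * psi lam (xt t \<omega>)"
      by (rule AE_I2) (auto simp: B_def indicator_def)
    have nae: "\<not> (AE \<omega> in P. indicator B \<omega> * psi lam (xt t \<omega>) \<le> indicator B \<omega> * ennreal M)"
    proof
      assume "AE \<omega> in P. indicator B \<omega> * psi lam (xt t \<omega>) \<le> indicator B \<omega> * ennreal M"
      then have "AE \<omega> in P. \<omega> \<notin> B" by (rule eventually_mono) (auto simp: B_def indicator_def)
      moreover have "{\<omega> \<in> space P. \<not> \<omega> \<notin> B} = B" using BP sets.sets_into_space by auto
      ultimately have "B \<in> null_sets P" using AE_iff_null[of P "\<lambda>\<omega>. \<omega> \<notin> B"] BP by simp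
      then show False using False by (simp add: null_sets_def)
    qed
    have "(\<integral>\<^sup>+\<omega>. indicator B \<omega> * ennreal M \<partial>P) < (\<integral>\<^sup>+\<omega>. indicator B \<omega> * psi lam (xt t \<omega>) \<partial>P)"
      by (rule nn_integral_less[OF m1 m2 fin ae1 nae])
    then show ?thesis using Ieq by simp
  qed
qed

end

context kwb
begin

lemma infdist_meas: "(\<lambda>y. infdist y S) \<in> borel_measurable borel"
  by (rule borel_measurable_continuous_onI) (intro continuous_intros)

lemma recursion:
  fixes S :: "(real^'n) set" and \<theta> :: "nat \<Rightarrow> real"
  assumes S: "closed S" "S \<noteq> {}" "S \<subseteq> X" and R: "\<forall>y\<in>X. infdist y S \<le> R"
    and mom: "\<And>t. AE \<omega> in P. psi lam (xt t \<omega>) \<le> ennreal M" and lam: "lam > 0" and M: "M \<ge> 0"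
    and mean: "\<forall>x\<in>X. \<forall>p\<in>S. dist x p = infdist x S \<longrightarrow>
        (2*\<kappa>/3) * infdist x S \<le> (\<integral>z. kw_dir l \<nu> x (fst z) (snd z) \<bullet> (x - p) \<partial>(D \<Otimes>\<^sub>M D))"
    and kap: "\<kappa> > 0" and om: "wg > 0" and eta: "\<eta> > 0"
    and c1: "2*\<eta>*exp(wg*R) \<le> lam/2"
    and c2: "2*\<eta>*(exp(wg*R))\<^sup>2*(8*M/lam\<^sup>2) \<le> \<kappa>/12"
    and st: "\<And>t. t \<ge> T0 \<Longrightarrow> \<alpha> t > 0 \<and> \<eta> \<le> \<theta> (Suc t) * \<alpha> t \<and> \<theta> (Suc t) * \<alpha> t \<le> 2*\<eta>
        \<and> \<alpha> t*wg*exp(wg*R)*(2*M/lam\<^sup>2)/2 \<le> \<kappa>/24 \<and> 0 \<le> \<theta> t \<and> \<theta> t \<le> \<theta> (Suc t)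
        \<and> (\<theta> (Suc t) - \<theta> t)/wg \<le> \<eta>*\<kappa>/6"
    and B0: "exp (\<theta> T0 * gf wg R) \<le> B0"
      "exp (-(\<eta>*\<kappa>/12)) * B0 + exp (2*\<eta>*exp(wg*R)*(3*(2*M/lam\<^sup>2)/(2*\<kappa>))) * M \<le> B0"
  shows "t \<ge> T0 \<Longrightarrow> (\<integral>\<^sup>+\<omega>. ennreal (exp (\<theta> t * gf wg (infdist (xt t \<omega>) S))) \<partial>P) \<le> ennreal B0"
proof (induction t rule: dec_induct)
  interpret P: prob_space P by (rule P)
  have dR: "infdist (xt t \<omega>) S \<le> R" for t \<omega> using R xt_in_X by blast
  {
    case base
    have "(\<integral>\<^sup>+\<omega>. ennreal (exp (\<theta> T0 * gf wg (infdist (xt T0 \<omega>) S))) \<partial>P) \<le> (\<integral>\<^sup>+\<omega>. ennreal B0 \<partial>P)"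
    proof (rule nn_integral_mono)
      fix x
      have "gf wg (infdist (xt T0 x) S) \<le> gf wg R"
        using dR om by (simp add: gf_def divide_right_mono)
      then have "\<theta> T0 * gf wg (infdist (xt T0 x) S) \<le> \<theta> T0 * gf wg R" using st[of T0] by (simp add: mult_left_mono)
      then show "ennreal (exp (\<theta> T0 * gf wg (infdist (xt T0 x) S))) \<le> ennreal B0"
        using B0(1) by (intro ennreal_leI) (meson exp_le_cancel_iff order_trans)
    qed
    also have "\<dots> = ennreal B0" by (simp add: P.emeasure_space_1)
    finally show ?case .
  }
  {
    case (step t)
    note stt = st[OF step.hyps(1)]
    define \<rho> where "\<rho> = exp (-(\<eta>*\<kappa>/12))"
    define C where "C = exp (2*\<eta>*exp(wg*R)*(3*(2*M/lam\<^sup>2)/(2*\<kappa>))) * M"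
    have C0: "0 \<le> C" using M by (simp add: C_def)
    define Ff where "Ff p = ennreal (exp (\<theta> (Suc t) * gf wg (infdist (closest_point X (fst p - \<alpha> t *\<^sub>R kw_dir l \<nu> (fst p) (fst (snd p)) (snd (snd p)))) S)))" for p
    have Ffm: "Ff \<in> borel_measurable (borel \<Otimes>\<^sub>M (N \<Otimes>\<^sub>M N))"
    proof -
      have "(\<lambda>p. infdist (closest_point X (fst p - \<alpha> t *\<^sub>R kw_dir l \<nu> (fst p) (fst (snd p)) (snd (snd p)))) S) \<in> borel_measurable (borel \<Otimes>\<^sub>M (N \<Otimes>\<^sub>M N))"
        by (rule measurable_compose[OF step_meas infdist_meas])
      then show ?thesis unfolding Ff_def gf_def by measurable
    qed
    have "(\<integral>\<^sup>+\<omega>. ennreal (exp (\<theta> (Suc t) * gf wg (infdist (xt (Suc t) \<omega>) S))) \<partial>P)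
        = (\<integral>\<^sup>+\<omega>. Ff (xt t \<omega>, (Wp t \<omega>, Wm t \<omega>)) \<partial>P)"
      by (simp add: Ff_def)
    also have "\<dots> = (\<integral>\<^sup>+\<omega>. (\<integral>\<^sup>+z. Ff (xt t \<omega>, z) \<partial>(D \<Otimes>\<^sub>M D)) \<partial>P)"
      by (rule freeze[OF Ffm])
    also have "\<dots> \<le> (\<integral>\<^sup>+\<omega>. ennreal (\<rho> * exp (\<theta> t * gf wg (infdist (xt t \<omega>) S)) + C) \<partial>P)"
    proof (rule nn_integral_mono_AE)
      show "AE \<omega> in P. (\<integral>\<^sup>+z. Ff (xt t \<omega>, z) \<partial>(D \<Otimes>\<^sub>M D)) \<le> ennreal (\<rho> * exp (\<theta> t * gf wg (infdist (xt t \<omega>) S)) + C)"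
        using mom[of t]
      proof (rule eventually_mono)
        fix \<omega> assume pm: "psi lam (xt t \<omega>) \<le> ennreal M"
        define x where "x = xt t \<omega>"
        have xX: "x \<in> X" by (simp add: x_def xt_in_X)
        have cm: "(\<lambda>z. kw_dir l \<nu> x (fst z) (snd z)) \<in> borel_measurable (D \<Otimes>\<^sub>M D)"
        proof -
          have "(\<lambda>p. kw_dir l \<nu> (fst p) (fst (snd p)) (snd (snd p))) \<circ> (\<lambda>z. (x, z)) \<in> borel_measurable (D \<Otimes>\<^sub>M D)"
            by (rule measurable_comp[OF _ kw_dir_meas_D]) simp
          then show ?thesis by (simp add: o_def)
        qed
        have "(\<integral>\<^sup>+z. ennreal (exp (\<theta> (Suc t) * gf wg (infdist (closest_point X (x - \<alpha> t *\<^sub>R kw_dir l \<nu> x (fst z) (snd z))) S))) \<partial>(D \<Otimes>\<^sub>M D))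
          \<le> ennreal (exp (-(\<eta>*\<kappa>/12)) * exp (\<theta> t * gf wg (infdist x S)) + exp (2*\<eta>*exp(wg*R)*(3*(2*M/lam\<^sup>2)/(2*\<kappa>))) * M)"
          by (rule frozen_step[OF DD_prob cm lam M _ X(2,3,1) xX S R _ kap om _ eta _ _ c1 c2])
             (use pm stt mean xX in \<open>auto simp: psi_def x_def\<close>)
        then show "(\<integral>\<^sup>+z. Ff (xt t \<omega>, z) \<partial>(D \<Otimes>\<^sub>M D)) \<le> ennreal (\<rho> * exp (\<theta> t * gf wg (infdist (xt t \<omega>) S)) + C)"
          by (simp add: Ff_def x_def \<rho>_def C_def)
      qed
    qed
    also have "\<dots> = ennreal \<rho> * (\<integral>\<^sup>+\<omega>. ennreal (exp (\<theta> t * gf wg (infdist (xt t \<omega>) S))) \<partial>P) + ennreal C"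
    proof -
      have m: "(\<lambda>\<omega>. ennreal (exp (\<theta> t * gf wg (infdist (xt t \<omega>) S)))) \<in> borel_measurable P"
        using measurable_compose[OF xt_meas infdist_meas] unfolding gf_def by measurable
      have "(\<integral>\<^sup>+\<omega>. ennreal (\<rho> * exp (\<theta> t * gf wg (infdist (xt t \<omega>) S)) + C) \<partial>P)
          = (\<integral>\<^sup>+\<omega>. ennreal \<rho> * ennreal (exp (\<theta> t * gf wg (infdist (xt t \<omega>) S))) + ennreal C \<partial>P)"
        using C0 by (intro nn_integral_cong) (simp add: \<rho>_def ennreal_mult ennreal_plus)
      also have "\<dots> = (\<integral>\<^sup>+\<omega>. ennreal \<rho> * ennreal (exp (\<theta> t * gf wg (infdist (xt t \<omega>) S))) \<partial>P) + (\<integral>\<^sup>+\<omega>. ennreal C \<partial>P)"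
        using m by (intro nn_integral_add) auto
      also have "\<dots> = ennreal \<rho> * (\<integral>\<^sup>+\<omega>. ennreal (exp (\<theta> t * gf wg (infdist (xt t \<omega>) S))) \<partial>P) + ennreal C"
        using m by (simp add: nn_integral_cmult P.emeasure_space_1)
      finally show ?thesis .
    qed
    also have "\<dots> \<le> ennreal \<rho> * ennreal B0 + ennreal C"
      using step.IH by (intro add_right_mono mult_left_mono) auto
    also have "\<dots> = ennreal (\<rho> * B0 + C)"
    proof -
      have "0 \<le> B0" using B0(1) by (meson exp_ge_zero order_trans)
      then show ?thesis using C0 by (simp add: \<rho>_def ennreal_mult ennreal_plus)
    qed
    also have "\<dots> \<le> ennreal B0" using B0(2) by (intro ennreal_leI) (simp add: \<rho>_def C_def)
    finally show ?case .
  }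
qed

end

lemma En_ge_one:
  assumes M: "prob_space M" and d0: "\<And>\<omega>. 0 \<le> d \<omega>"
    and wg: "wg > 0" and th: "\<theta> \<ge> 0"
    and En: "(\<integral>\<^sup>+\<omega>. ennreal (exp (\<theta> * gf wg (d \<omega>))) \<partial>M) \<le> ennreal B"
  shows "1 \<le> B"
proof -
  interpret prob_space M by fact
  have "(\<integral>\<^sup>+\<omega>. ennreal 1 \<partial>M) \<le> (\<integral>\<^sup>+\<omega>. ennreal (exp (\<theta> * gf wg (d \<omega>))) \<partial>M)"
  proof (rule nn_integral_mono)
    fix x
    have "0 \<le> \<theta> * gf wg (d x)" using th gf_nonneg[OF wg d0] by simp
    then show "ennreal 1 \<le> ennreal (exp (\<theta> * gf wg (d x)))" by (intro ennreal_leI) simp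
  qed
  then have "1 \<le> (\<integral>\<^sup>+\<omega>. ennreal (exp (\<theta> * gf wg (d \<omega>))) \<partial>M)" using emeasure_space_1 by simp
  then have le: "1 \<le> ennreal B" using En by (rule order_trans)
  show ?thesis
  proof (rule ccontr)
    assume "\<not> 1 \<le> B"
    then have "ennreal B < ennreal 1" by (intro ennreal_lessI) auto
    then show False using le by (simp add: not_le[symmetric])
  qed
qed

lemma markov_gf:
  assumes M: "prob_space M" and dm: "d \<in> borel_measurable M" and d0: "\<And>\<omega>. 0 \<le> d \<omega>"
    and wg: "wg > 0" and th: "\<theta> \<ge> 0"
    and En: "(\<integral>\<^sup>+\<omega>. ennreal (exp (\<theta> * gf wg (d \<omega>))) \<partial>M) \<le> ennreal B"
  shows "measure M {\<omega>\<in>space M. z \<le> d \<omega>} \<le> B * exp (-(\<theta>*z))"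
proof -
  interpret prob_space M by fact
  have B0: "0 \<le> B" using En_ge_one[OF M d0 wg th En] by simp
  have Am: "{\<omega>\<in>space M. z \<le> d \<omega>} \<in> sets M" using dm by measurable
  have "emeasure M {\<omega>\<in>space M. z \<le> d \<omega>} = (\<integral>\<^sup>+\<omega>. indicator {\<omega>\<in>space M. z \<le> d \<omega>} \<omega> \<partial>M)"
    using Am by simp
  also have "\<dots> \<le> (\<integral>\<^sup>+\<omega>. ennreal (exp (-(\<theta>*z))) * ennreal (exp (\<theta> * gf wg (d \<omega>))) \<partial>M)"
  proof (rule nn_integral_mono)
    fix \<omega>
    show "indicator {\<omega>\<in>space M. z \<le> d \<omega>} \<omega> \<le> ennreal (exp (-(\<theta>*z))) * ennreal (exp (\<theta> * gf wg (d \<omega>)))"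
    proof (cases "z \<le> d \<omega>")
      case True
      have "z \<le> gf wg (d \<omega>)" using True gf_ge[OF wg, of "d \<omega>"] by simp
      then have "\<theta> * z \<le> \<theta> * gf wg (d \<omega>)" using th by (rule mult_left_mono)
      then have "1 \<le> exp (-(\<theta>*z)) * exp (\<theta> * gf wg (d \<omega>))" by (simp flip: exp_add)
      then show ?thesis by (simp add: indicator_def ennreal_mult[symmetric] ennreal_leI del: ennreal_mult)
    qed (simp add: indicator_def)
  qed
  also have "\<dots> = ennreal (exp (-(\<theta>*z))) * (\<integral>\<^sup>+\<omega>. ennreal (exp (\<theta> * gf wg (d \<omega>))) \<partial>M)"
  proof -
    have em: "(\<lambda>\<omega>. ennreal (exp (\<theta> * gf wg (d \<omega>)))) \<in> borel_measurable M" using dm unfolding gf_def by measurable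
    show ?thesis by (rule nn_integral_cmult[OF em])
  qed
  also have "\<dots> \<le> ennreal (exp (-(\<theta>*z))) * ennreal B" using En by (rule mult_left_mono) simp
  also have "\<dots> = ennreal (B * exp (-(\<theta>*z)))" using B0 by (simp add: ennreal_mult mult.commute)
  finally show ?thesis using B0 by (simp add: emeasure_eq_measure)
qed

lemma mean_gf:
  assumes M: "prob_space M" and dm: "d \<in> borel_measurable M" and d0: "\<And>\<omega>. 0 \<le> d \<omega>" and dR: "\<And>\<omega>. d \<omega> \<le> R"
    and wg: "wg > 0" and th: "\<theta> > 0"
    and En: "(\<integral>\<^sup>+\<omega>. ennreal (exp (\<theta> * gf wg (d \<omega>))) \<partial>M) \<le> ennreal B"
  shows "(\<integral>\<omega>. d \<omega> \<partial>M) \<le> B / \<theta>"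
proof -
  interpret prob_space M by fact
  have em: "(\<lambda>\<omega>. exp (\<theta> * gf wg (d \<omega>))) \<in> borel_measurable M" using dm unfolding gf_def by measurable
  have gR: "gf wg (d \<omega>) \<le> gf wg R" for \<omega> using dR[of \<omega>] wg by (simp add: gf_def divide_right_mono)
  have eint: "integrable M (\<lambda>\<omega>. exp (\<theta> * gf wg (d \<omega>)))"
  proof (rule Bochner_Integration.integrable_bound[OF integrable_const[of "exp (\<theta> * gf wg R)"] em])
    show "AE x in M. norm (exp (\<theta> * gf wg (d x))) \<le> norm (exp (\<theta> * gf wg R))"
      using gR th by (auto intro!: mult_left_mono)
  qed
  have dint: "integrable M d"
  proof (rule Bochner_Integration.integrable_bound[OF integrable_const[of R] dm], rule AE_I2)
    fix x
    have "d x \<le> \<bar>R\<bar>" using dR[of x] abs_ge_self[of R] by linarith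
    then show "norm (d x) \<le> norm R" using d0[of x] by simp
  qed
  have "(\<integral>\<omega>. d \<omega> \<partial>M) \<le> (\<integral>\<omega>. exp (\<theta> * gf wg (d \<omega>)) / \<theta> \<partial>M)"
  proof (rule integral_mono[OF dint])
    show "integrable M (\<lambda>\<omega>. exp (\<theta> * gf wg (d \<omega>)) / \<theta>)" using eint by simp
    fix \<omega>
    have "d \<omega> \<le> exp (\<theta> * d \<omega>) / \<theta>" using lin_le_exp[OF th d0] .
    also have "\<dots> \<le> exp (\<theta> * gf wg (d \<omega>)) / \<theta>"
      using gf_ge[OF wg, of "d \<omega>"] th by (intro divide_right_mono) auto
    finally show "d \<omega> \<le> exp (\<theta> * gf wg (d \<omega>)) / \<theta>" .
  qed
  also have "\<dots> = (\<integral>\<omega>. exp (\<theta> * gf wg (d \<omega>)) \<partial>M) / \<theta>" by simp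
  also have "(\<integral>\<omega>. exp (\<theta> * gf wg (d \<omega>)) \<partial>M) \<le> B"
  proof -
    have "ennreal (\<integral>\<omega>. exp (\<theta> * gf wg (d \<omega>)) \<partial>M) = (\<integral>\<^sup>+\<omega>. ennreal (exp (\<theta> * gf wg (d \<omega>))) \<partial>M)"
      using eint by (simp add: nn_integral_eq_integral)
    also have "\<dots> \<le> ennreal B" by (rule En)
    finally have "ennreal (\<integral>\<omega>. exp (\<theta> * gf wg (d \<omega>)) \<partial>M) \<le> ennreal B" .
    moreover have "0 \<le> (\<integral>\<omega>. exp (\<theta> * gf wg (d \<omega>)) \<partial>M)" by simp
    moreover have "1 \<le> B" using En_ge_one[OF M d0 wg less_imp_le[OF th] En] .
    ultimately show ?thesis by (simp add: ennreal_le_iff)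
  qed
  then have "(\<integral>\<omega>. exp (\<theta> * gf wg (d \<omega>)) \<partial>M) / \<theta> \<le> B / \<theta>" using th by (simp add: divide_right_mono)
  finally show ?thesis .
qed

context kwb
begin

lemma main:
  fixes g :: "real^'n \<Rightarrow> real^'n" and a u \<gamma> \<kappa> c :: real
  assumes Xb: "bounded X"
    and lint: "\<And>y. integrable D (l y)"
    and lip: "\<exists>C. C-lipschitz_on X (lmean D l)"
    and alpha: "\<alpha> = (\<lambda>t. a / (u + real t) powr \<gamma>)"
    and step: "a > 0" "u > 0" "0 \<le> \<gamma>" "\<gamma> \<le> 1"
    and nu: "\<nu> > 0"
    and D1: "\<kappa> > 0" "\<forall>y\<in>X. \<forall>ys\<in>{xs \<in> X. \<forall>y\<in>X. lmean D l xs \<le> lmean D l y}. dist y ys = infdist y {xs \<in> X. \<forall>y\<in>X. lmean D l xs \<le> lmean D l y}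
                 \<longrightarrow> g y \<bullet> (y - ys) \<ge> \<kappa> * norm (y - ys)"
    and D2: "\<exists>lam>0. \<exists>M::real. \<forall>t. AE \<omega> in P.
               nn_cond_exp P (kw_filt P N Wp Wm t) (\<lambda>\<omega>. ennreal (exp (lam * norm (kw_dir l \<nu> (xt t \<omega>) (Wp t \<omega>) (Wm t \<omega>))))) \<omega> \<le> ennreal M"
    and D3: "c > 0" "\<forall>y\<in>X. norm (g y - (1 / (2 * \<nu>)) *\<^sub>R (\<chi> i. lmean D l (y + \<nu> *\<^sub>R axis i 1) - lmean D l (y - \<nu> *\<^sub>R axis i 1)))
                 \<le> c * \<nu>\<^sup>2"
    and nu_small: "\<nu> \<le> sqrt (\<kappa> / (3 * c))"
  shows "\<exists>J I K L. J > 0 \<and> I > 0 \<and> K > 0 \<and> L > 0 \<and>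
     (\<forall>t z. z \<ge> 0 \<longrightarrow>
        measure P {\<omega> \<in> space P. infdist (xt (Suc t) \<omega>) {xs \<in> X. \<forall>y\<in>X. lmean D l xs \<le> lmean D l y} \<ge> z} \<le> J * exp (- I * tpow t \<gamma> * z)) \<and>
     (\<forall>t\<ge>1. (\<integral>\<omega>. infdist (xt (Suc t) \<omega>) {xs \<in> X. \<forall>y\<in>X. lmean D l xs \<le> lmean D l y} \<partial>P) \<le> K / real t powr \<gamma>
           \<and> (\<integral>\<omega>. lmean D l (xt (Suc t) \<omega>) - (INF y\<in>X. lmean D l y) \<partial>P) \<le> L / real t powr \<gamma>)"
proof -
  interpret Pp: prob_space P by (rule P)
  define f where "f = lmean D l"
  define S where "S = {xs \<in> X. \<forall>y\<in>X. f xs \<le> f y}"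
  obtain Cl where Cl: "Cl-lipschitz_on X f" using lip f_def by auto
  have Cl0: "0 \<le> Cl" using Cl by (rule lipschitz_on_nonneg)
  have fc: "continuous_on X f" using Cl by (rule lipschitz_on_continuous_on)
  have Xc: "compact X" using Xb X(2) by (simp add: compact_eq_bounded_closed)
  obtain p0 where p0: "p0 \<in> X" "\<forall>y\<in>X. f p0 \<le> f y" using continuous_attains_inf[OF Xc X(1) fc] by blast
  have p0S: "p0 \<in> S" using p0 by (simp add: S_def)
  have Sne: "S \<noteq> {}" using p0S by auto
  have SX: "S \<subseteq> X" by (auto simp: S_def)
  have Seq: "S = X \<inter> f -` {..f p0}" using p0 by (auto simp: S_def intro: order_trans)
  have Scl: "closed S" unfolding Seq by (rule continuous_closed_preimage[OF fc X(2) closed_atMost])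
  obtain B where B: "\<forall>y\<in>X. norm y \<le> B" using Xb by (auto simp: bounded_iff)
  define R where "R = 2*B + 1"
  have B0: "0 \<le> B" using B p0(1) norm_ge_zero order_trans by blast
  have Rpos: "R > 0" using B0 by (simp add: R_def)
  have dR: "\<forall>y\<in>X. infdist y S \<le> R"
  proof
    fix y assume y: "y \<in> X"
    have "infdist y S \<le> dist y p0" by (rule infdist_le[OF p0S])
    also have "\<dots> \<le> norm y + norm p0" by (simp add: dist_norm norm_triangle_ineq4)
    also have "\<dots> \<le> R" using B[rule_format, OF y] B[rule_format, OF p0(1)] by (simp add: R_def)
    finally show "infdist y S \<le> R" .
  qed
  define d where "d t \<omega> = infdist (xt t \<omega>) S" for t \<omega>
  have d0: "0 \<le> d t \<omega>" "d t \<omega> \<le> R" for t \<omega> using dR xt_in_X by (auto simp: d_def infdist_nonneg)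
  have dm: "d t \<in> borel_measurable P" for t
    using measurable_compose[OF xt_meas infdist_meas] by (simp add: d_def[abs_def])
  have dint: "integrable P (d t)" for t
  proof (rule Bochner_Integration.integrable_bound[OF Pp.integrable_const[of R] dm], rule AE_I2)
    fix x
    have "d t x \<le> \<bar>R\<bar>" using d0(2)[of t x] abs_ge_self[of R] by linarith
    then show "norm (d t x) \<le> norm R" using d0(1)[of t x] by simp
  qed
  have Infp: "(INF y\<in>X. f y) = f p0"
    using p0 by (intro cInf_eq_minimum) auto
  have gap: "0 \<le> f x - f p0 \<and> f x - f p0 \<le> Cl * infdist x S" if x: "x \<in> X" for x
  proof -
    obtain p where p: "p \<in> S" "infdist x S = dist x p" using infdist_attains_inf[OF Scl Sne] by metis
    have pX: "p \<in> X" using p SX by auto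
    have fp: "f p = f p0" using p p0 p0S pX by (auto simp: S_def intro: antisym)
    have "f x - f p \<le> dist (f x) (f p)" by (simp add: dist_real_def)
    also have "\<dots> \<le> Cl * dist x p" by (rule lipschitz_onD[OF Cl x pX])
    finally show ?thesis using p fp p0 x by auto
  qed
  have fm: "f \<in> borel_measurable borel"
  proof -
    interpret Dp: prob_space D by (rule D_prob)
    have sBD: "sets (borel \<Otimes>\<^sub>M D) = sets (borel \<Otimes>\<^sub>M N)" by (intro sets_pair_measure_cong) (auto simp: Dsets)
    have "(\<lambda>(x, y). l x y) \<in> borel_measurable (borel \<Otimes>\<^sub>M D)"
      by (subst measurable_cong_sets[OF sBD refl]) (rule lmeas)
    from Dp.borel_measurable_lebesgue_integral[OF this] show ?thesis
      by (simp add: f_def lmean_def[abs_def])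
  qed
  have gen_mean: "(\<integral>\<omega>. d t \<omega> \<partial>P) \<le> R" for t
  proof -
    have "(\<integral>\<omega>. d t \<omega> \<partial>P) \<le> (\<integral>\<omega>. R \<partial>P)" by (rule integral_mono[OF dint Pp.integrable_const]) (use d0 in auto)
    then show ?thesis by (simp add: Pp.prob_space)
  qed
  have gen_gap: "(\<integral>\<omega>. f (xt t \<omega>) - (INF y\<in>X. f y) \<partial>P) \<le> Cl * (\<integral>\<omega>. d t \<omega> \<partial>P)" for t
  proof -
    have m: "(\<lambda>\<omega>. f (xt t \<omega>) - f p0) \<in> borel_measurable P"
      using measurable_compose[OF xt_meas fm] by measurable
    have i1: "integrable P (\<lambda>\<omega>. f (xt t \<omega>) - f p0)"
    proof (rule Bochner_Integration.integrable_bound[OF Pp.integrable_const[of "Cl * R"] m], rule AE_I2)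
      fix x
      have "f (xt t x) - f p0 \<le> Cl * R"
        using gap[OF xt_in_X[of t x]] d0[of t x] Cl0 by (smt (verit) d_def mult_left_mono)
      then show "norm (f (xt t x) - f p0) \<le> norm (Cl * R)" using gap[OF xt_in_X[of t x]] by simp
    qed
    have "(\<integral>\<omega>. f (xt t \<omega>) - (INF y\<in>X. f y) \<partial>P) \<le> (\<integral>\<omega>. Cl * d t \<omega> \<partial>P)"
    proof -
      have i2: "integrable P (\<lambda>\<omega>. Cl * d t \<omega>)" using dint[of t] by simp
      show ?thesis unfolding Infp
        by (rule integral_mono[OF i1 i2]) (use gap xt_in_X in \<open>auto simp: d_def\<close>)
    qed
    then show ?thesis by simp
  qed
  have gen_tail0: "measure P {\<omega> \<in> space P. z \<le> d t \<omega>} = 0" if "z > R" for t z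
  proof -
    have "{\<omega> \<in> space P. z \<le> d t \<omega>} = {}" using that d0(2)[of t] by (auto simp: not_le intro: le_less_trans)
    then show ?thesis by (simp only:) simp
  qed
  have gen_tail1: "measure P {\<omega> \<in> space P. z \<le> d t \<omega>} \<le> 1" for t z by (rule Pp.prob_le_1)
  show ?thesis
  proof (cases "\<gamma> = 0")
    case True
    have tp: "tpow t \<gamma> = 1" for t using True by (simp add: tpow_def)
    have tp2: "real t powr \<gamma> = 1" if "t \<ge> 1" for t using True that by simp
    have tailA: "\<forall>t z. z \<ge> 0 \<longrightarrow> measure P {\<omega> \<in> space P. infdist (xt (Suc t) \<omega>) S \<ge> z} \<le> exp R * exp (- 1 * tpow t \<gamma> * z)"
    proof (intro allI impI)
      fix t and z :: real assume z: "0 \<le> z"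
      show "measure P {\<omega> \<in> space P. infdist (xt (Suc t) \<omega>) S \<ge> z} \<le> exp R * exp (- 1 * tpow t \<gamma> * z)"
      proof (cases "z \<le> R")
        case True
        have "1 \<le> exp (R - z)" using True by simp
        also have "exp (R - z) = exp R * exp (- 1 * tpow t \<gamma> * z)" by (simp add: tp exp_diff exp_minus field_simps)
        finally show ?thesis using gen_tail1[of z "Suc t"] unfolding d_def by linarith
      next
        case False
        then show ?thesis using gen_tail0[of z "Suc t"] unfolding d_def by simp
      qed
    qed
    have meanA: "\<forall>t\<ge>1. (\<integral>\<omega>. infdist (xt (Suc t) \<omega>) S \<partial>P) \<le> R / real t powr \<gamma>
        \<and> (\<integral>\<omega>. f (xt (Suc t) \<omega>) - (INF y\<in>X. f y) \<partial>P) \<le> (Cl * R + 1) / real t powr \<gamma>"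
    proof (intro allI impI conjI)
      fix t :: nat assume t: "1 \<le> t"
      show "(\<integral>\<omega>. infdist (xt (Suc t) \<omega>) S \<partial>P) \<le> R / real t powr \<gamma>"
        using gen_mean[of "Suc t"] tp2[OF t] by (simp add: d_def)
      have "Cl * (\<integral>\<omega>. d (Suc t) \<omega> \<partial>P) \<le> Cl * R" using gen_mean[of "Suc t"] Cl0 by (rule mult_left_mono)
      then show "(\<integral>\<omega>. f (xt (Suc t) \<omega>) - (INF y\<in>X. f y) \<partial>P) \<le> (Cl * R + 1) / real t powr \<gamma>"
        using gen_gap[of "Suc t"] tp2[OF t] by simp
    qed
    show ?thesis
      using tailA meanA Rpos Cl0 unfolding S_def f_def
      by (intro exI[of _ "exp R"] exI[of _ 1] exI[of _ R] exI[of _ "Cl * R + 1"]) (auto simp: add_nonneg_pos)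
  next
    case False
    then have gpos: "\<gamma> > 0" using step(3) by simp
    obtain lam M0 where lam: "lam > 0" and D2': "\<And>t. AE \<omega> in P.
               nn_cond_exp P (kw_filt P N Wp Wm t) (\<lambda>\<omega>. ennreal (exp (lam * norm (kw_dir l \<nu> (xt t \<omega>) (Wp t \<omega>) (Wm t \<omega>))))) \<omega> \<le> ennreal M0"
      using D2 by blast
    define M where "M = max M0 0"
    have M0: "M \<ge> 0" by (simp add: M_def)
    have eM: "ennreal M0 = ennreal M" by (cases "M0 \<ge> 0") (auto simp: M_def max_def ennreal_neg)
    have mom: "AE \<omega> in P. psi lam (xt t \<omega>) \<le> ennreal M" for t
      using moment_AE[OF D2'[of t]] eM by simp
    have cnu: "c * \<nu>\<^sup>2 \<le> \<kappa>/3"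
    proof -
      have q: "0 \<le> \<kappa> / (3 * c)" using D1(1) D3(1) by simp
      have "\<nu>\<^sup>2 \<le> (sqrt (\<kappa> / (3 * c)))\<^sup>2" using nu_small nu by (intro power_mono) auto
      also have "\<dots> = \<kappa> / (3 * c)" using q by simp
      finally have "\<nu>\<^sup>2 \<le> \<kappa> / (3 * c)" .
      then have "c * \<nu>\<^sup>2 \<le> c * (\<kappa> / (3 * c))" using D3(1) by (intro mult_left_mono) auto
      then show ?thesis using D3(1) by simp
    qed
    have mean: "\<forall>x\<in>X. \<forall>p\<in>S. dist x p = infdist x S \<longrightarrow>
        (2*\<kappa>/3) * infdist x S \<le> (\<integral>z. kw_dir l \<nu> x (fst z) (snd z) \<bullet> (x - p) \<partial>(D \<Otimes>\<^sub>M D))"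
    proof (intro ballI impI)
      fix x p assume x: "x \<in> X" and p: "p \<in> S" and dp: "dist x p = infdist x S"
      define h where "h = (1 / (2 * \<nu>)) *\<^sub>R (\<chi> i. lmean D l (x + \<nu> *\<^sub>R axis i 1) - lmean D l (x - \<nu> *\<^sub>R axis i 1))"
      have mf: "(\<integral>z. kw_dir l \<nu> x (fst z) (snd z) \<bullet> (x - p) \<partial>(D \<Otimes>\<^sub>M D)) = h \<bullet> (x - p)"
        unfolding h_def by (rule mean_formula[OF lint])
      have g1: "g x \<bullet> (x - p) \<ge> \<kappa> * norm (x - p)" using D1(2) x p dp by (auto simp: S_def f_def)
      have g2: "norm (g x - h) \<le> c * \<nu>\<^sup>2" using D3(2) x by (simp add: h_def)
      have "(g x - h) \<bullet> (x - p) \<le> norm (g x - h) * norm (x - p)" by (rule norm_cauchy_schwarz)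
      also have "\<dots> \<le> (\<kappa>/3) * norm (x - p)" using g2 cnu by (intro mult_right_mono) auto
      finally have "h \<bullet> (x - p) \<ge> \<kappa> * norm (x - p) - (\<kappa>/3) * norm (x - p)"
        using g1 by (simp add: inner_diff_left)
      moreover have "norm (x - p) = infdist x S" using dp by (simp add: dist_norm)
      ultimately show "(2*\<kappa>/3) * infdist x S \<le> (\<integral>z. kw_dir l \<nu> x (fst z) (snd z) \<bullet> (x - p) \<partial>(D \<Otimes>\<^sub>M D))"
        unfolding mf by simp
    qed
    define wg where "wg = 6/(a*\<kappa>)"
    have wg: "wg > 0" using step(1) D1(1) by (simp add: wg_def)
    define E where "E = exp (wg*R)"
    have E1: "E \<ge> 1" using wg Rpos by (simp add: E_def)
    define K2 where "K2 = 2*M/lam\<^sup>2"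
    define K3 where "K3 = 8*M/lam\<^sup>2"
    have K2: "K2 \<ge> 0" "K3 \<ge> 0" using M0 by (auto simp: K2_def K3_def)
    define \<eta> where "\<eta> = min (lam/(4*E)) (\<kappa>/(24*E\<^sup>2*K3 + 1))"
    have den: "24*E\<^sup>2*K3 + 1 > 0" using K2 by (simp add: add_nonneg_pos)
    have eta: "\<eta> > 0" using lam E1 D1(1) den by (simp add: \<eta>_def)
    have c1: "2*\<eta>*exp(wg*R) \<le> lam/2"
    proof -
      have "\<eta> \<le> lam/(4*E)" by (simp add: \<eta>_def)
      then have "\<eta> * (4*E) \<le> lam" using E1 by (simp add: field_simps)
      then show ?thesis by (simp add: E_def)
    qed
    have c2: "2*\<eta>*(exp(wg*R))\<^sup>2*(8*M/lam\<^sup>2) \<le> \<kappa>/12"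
    proof -
      have "\<eta> \<le> \<kappa>/(24*E\<^sup>2*K3 + 1)" by (simp add: \<eta>_def)
      then have a1: "\<eta> * (24*E\<^sup>2*K3 + 1) \<le> \<kappa>" using pos_le_divide_eq[OF den] by blast
      have "\<eta> * (24*E\<^sup>2*K3) \<le> \<eta> * (24*E\<^sup>2*K3 + 1)" using eta by simp
      then have "12 * (2*\<eta>*E\<^sup>2*K3) \<le> \<kappa>" using a1 by (simp add: algebra_simps)
      then show ?thesis by (simp add: E_def K3_def)
    qed
    define amax where "amax = \<kappa>/(12*wg*E*K2 + 1)"
    have amax: "amax > 0" using D1(1) wg E1 K2 by (simp add: amax_def add_nonneg_pos)
    define \<theta> where "\<theta> t = \<eta> * (u + real t) powr \<gamma> / a" for t
    define T0 where "T0 = nat \<lceil>max 1 ((a/amax) powr (1/\<gamma>))\<rceil>"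
    have T0ge: "real T0 \<ge> max 1 ((a/amax) powr (1/\<gamma>))" unfolding T0_def by linarith
    have T01: "T0 \<ge> 1" using T0ge by linarith
    have utge: "u + real t \<ge> 1" if "t \<ge> T0" for t using that T0ge step(2) by linarith
    have alt: "\<alpha> t \<le> amax" if "t \<ge> T0" for t
    proof -
      have "(a/amax) powr (1/\<gamma>) \<le> u + real t" using that T0ge step(2) by linarith
      then have "((a/amax) powr (1/\<gamma>)) powr \<gamma> \<le> (u + real t) powr \<gamma>"
        using step(3) by (intro powr_mono2) auto
      moreover have "((a/amax) powr (1/\<gamma>)) powr \<gamma> = a/amax"
        using gpos step(1) amax by (simp add: powr_powr)
      ultimately have le: "a/amax \<le> (u + real t) powr \<gamma>" by simp
      have pos: "0 < (u + real t) powr \<gamma>" using step(2) by simp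
      show ?thesis unfolding alpha using le amax pos step(1) by (simp add: field_simps)
    qed
    have st: "\<alpha> t > 0 \<and> \<eta> \<le> \<theta> (Suc t) * \<alpha> t \<and> \<theta> (Suc t) * \<alpha> t \<le> 2*\<eta>
        \<and> \<alpha> t*wg*exp(wg*R)*(2*M/lam\<^sup>2)/2 \<le> \<kappa>/24 \<and> 0 \<le> \<theta> t \<and> \<theta> t \<le> \<theta> (Suc t)
        \<and> (\<theta> (Suc t) - \<theta> t)/wg \<le> \<eta>*\<kappa>/6" if t: "t \<ge> T0" for t
    proof (intro conjI)
      have u1: "u + real t \<ge> 1" by (rule utge[OF t])
      have sc: "u + real (Suc t) = (u + real t) + 1" by simp
      have pos: "0 < (u + real t) powr \<gamma>" using u1 by simp
      show "\<alpha> t > 0" unfolding alpha using step(1) pos by simp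
      have rat: "\<theta> (Suc t) * \<alpha> t = \<eta> * ((u + real t + 1) powr \<gamma> / (u + real t) powr \<gamma>)"
        unfolding \<theta>_def alpha sc using step(1) pos by (simp add: field_simps)
      show "\<eta> \<le> \<theta> (Suc t) * \<alpha> t" unfolding rat using powr_ratio_le(2)[OF u1 step(3,4)] eta
        by (metis mult.right_neutral mult_left_mono less_imp_le)
      have "\<eta> * ((u + real t + 1) powr \<gamma> / (u + real t) powr \<gamma>) \<le> \<eta> * 2"
        using powr_ratio_le(1)[OF u1 step(3,4)] eta by (intro mult_left_mono) auto
      then show "\<theta> (Suc t) * \<alpha> t \<le> 2*\<eta>" unfolding rat by simp
      have den2: "12*wg*E*K2 + 1 > 0" using wg E1 K2 by (simp add: add_nonneg_pos)
      have "\<alpha> t \<le> \<kappa>/(12*wg*E*K2 + 1)" using alt[OF t] by (simp add: amax_def)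
      then have "\<alpha> t * (12*wg*E*K2 + 1) \<le> \<kappa>" using pos_le_divide_eq[OF den2] by blast
      moreover have "\<alpha> t * (12*wg*E*K2) \<le> \<alpha> t * (12*wg*E*K2 + 1)" using \<open>\<alpha> t > 0\<close> by simp
      ultimately have "12 * (\<alpha> t*wg*E*K2) \<le> \<kappa>" by (simp add: algebra_simps)
      then show "\<alpha> t*wg*exp(wg*R)*(2*M/lam\<^sup>2)/2 \<le> \<kappa>/24" by (simp add: E_def K2_def mult_ac)
      show "0 \<le> \<theta> t" unfolding \<theta>_def using eta step(1) by simp
      have "(u + real t) powr \<gamma> \<le> (u + real t + 1) powr \<gamma>" using u1 step(3) by (intro powr_mono2) auto
      then show "\<theta> t \<le> \<theta> (Suc t)" unfolding \<theta>_def sc using eta step(1)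
        by (intro divide_right_mono mult_left_mono) auto
      have "(u + real t + 1) powr \<gamma> - (u + real t) powr \<gamma> \<le> 1" using powr_succ_le[OF u1 step(3,4)] by simp
      then have "(\<eta> / a) * ((u + real t + 1) powr \<gamma> - (u + real t) powr \<gamma>) \<le> (\<eta> / a) * 1"
        using eta step(1) by (intro mult_left_mono) auto
      moreover have "\<theta> (Suc t) - \<theta> t = (\<eta> / a) * ((u + real t + 1) powr \<gamma> - (u + real t) powr \<gamma>)"
        unfolding \<theta>_def sc by (simp add: algebra_simps diff_divide_distrib)
      ultimately have "\<theta> (Suc t) - \<theta> t \<le> \<eta> / a" by simp
      then have "(\<theta> (Suc t) - \<theta> t)/wg \<le> (\<eta> / a)/wg" using wg by (intro divide_right_mono) auto
      also have "(\<eta> / a)/wg = \<eta>*\<kappa>/6" using step(1) D1(1) by (simp add: wg_def field_simps)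
      finally show "(\<theta> (Suc t) - \<theta> t)/wg \<le> \<eta>*\<kappa>/6" .
    qed
    define \<rho> where "\<rho> = exp (-(\<eta>*\<kappa>/12))"
    define C where "C = exp (2*\<eta>*exp(wg*R)*(3*(2*M/lam\<^sup>2)/(2*\<kappa>))) * M"
    have \<rho>1: "\<rho> < 1" "0 < \<rho>" using eta D1(1) by (auto simp: \<rho>_def)
    have C0: "C \<ge> 0" using M0 by (simp add: C_def)
    define B0 where "B0 = max (exp (\<theta> T0 * gf wg R)) (C/(1-\<rho>))"
    have B0a: "exp (\<theta> T0 * gf wg R) \<le> B0" by (simp add: B0_def)
    have B0b: "exp (-(\<eta>*\<kappa>/12)) * B0 + exp (2*\<eta>*exp(wg*R)*(3*(2*M/lam\<^sup>2)/(2*\<kappa>))) * M \<le> B0"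
    proof -
      have "C/(1-\<rho>) \<le> B0" by (simp add: B0_def)
      then have "C \<le> (1-\<rho>) * B0" using \<rho>1 by (simp add: field_simps)
      then have "\<rho> * B0 + C \<le> B0" by (simp add: algebra_simps)
      then show ?thesis unfolding \<rho>_def C_def .
    qed
    have B0pos: "B0 > 0" using B0a by (meson exp_gt_zero less_le_trans)
    have Rec: "(\<integral>\<^sup>+\<omega>. ennreal (exp (\<theta> t * gf wg (infdist (xt t \<omega>) S))) \<partial>P) \<le> ennreal B0" if "t \<ge> T0" for t
      by (rule recursion[OF Scl Sne SX dR mom lam M0 mean D1(1) wg eta c1 c2 st B0a B0b that])
    have thpos: "\<theta> t > 0" for t unfolding \<theta>_def using eta step(1,2) by simp
    define I where "I = \<eta> / a"
    have Ipos: "I > 0" using eta step(1) by (simp add: I_def)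
    have Ith: "I * tpow t \<gamma> \<le> \<theta> (Suc t)" for t
    proof (cases "t = 0")
      case True then show ?thesis using gpos thpos[of "Suc t"] by (simp add: tpow_def)
    next
      case False
      have "real t powr \<gamma> \<le> (u + real (Suc t)) powr \<gamma>" using step(2,3) by (intro powr_mono2) auto
      then have "I * real t powr \<gamma> \<le> I * (u + real (Suc t)) powr \<gamma>" using Ipos by (intro mult_left_mono) auto
      then show ?thesis using False by (simp add: tpow_def \<theta>_def I_def)
    qed
    have tpT0: "tpow t \<gamma> \<le> real T0" if "Suc t < T0" for t
    proof (cases "t = 0")
      case True then show ?thesis using gpos by (simp add: tpow_def)
    next
      case False
      then have "real t powr \<gamma> \<le> real t powr 1" using step(4) by (intro powr_mono) auto
      then show ?thesis using False that by (simp add: tpow_def)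
    qed
    define J where "J = max B0 (exp (I * real T0 * R))"
    have Jpos: "J > 0" using B0pos by (simp add: J_def less_max_iff_disj)
    define K where "K = max (B0 * a / \<eta>) (R * real T0) + 1"
    define L where "L = (Cl + 1) * K"
    have Kpos: "K > 0"
    proof -
      have "0 \<le> R * real T0" using Rpos by simp
      then have "0 \<le> max (B0 * a / \<eta>) (R * real T0)" by (simp add: le_max_iff_disj)
      then show ?thesis by (simp add: K_def)
    qed
    have tailB: "\<forall>t z. z \<ge> 0 \<longrightarrow> measure P {\<omega> \<in> space P. infdist (xt (Suc t) \<omega>) S \<ge> z} \<le> J * exp (- I * tpow t \<gamma> * z)"
    proof (intro allI impI)
      fix t and z :: real assume z: "0 \<le> z"
      show "measure P {\<omega> \<in> space P. infdist (xt (Suc t) \<omega>) S \<ge> z} \<le> J * exp (- I * tpow t \<gamma> * z)"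
      proof (cases "Suc t \<ge> T0")
        case True
        have "measure P {\<omega> \<in> space P. z \<le> d (Suc t) \<omega>} \<le> B0 * exp (-(\<theta> (Suc t) * z))"
          by (rule markov_gf[OF P dm d0(1) wg less_imp_le[OF thpos]]) (use Rec[OF True] in \<open>simp add: d_def\<close>)
        also have "\<dots> \<le> J * exp (- I * tpow t \<gamma> * z)"
        proof (rule mult_mono)
          show "B0 \<le> J" by (simp add: J_def)
          have "I * tpow t \<gamma> * z \<le> \<theta> (Suc t) * z" using Ith[of t] z by (rule mult_right_mono)
          then show "exp (-(\<theta> (Suc t) * z)) \<le> exp (- I * tpow t \<gamma> * z)" by simp
        qed (use B0pos Jpos in auto)
        finally show ?thesis by (simp add: d_def)
      next
        case False
        show ?thesis
        proof (cases "z \<le> R")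
          case True
          have tp0: "0 \<le> tpow t \<gamma>" by (simp add: tpow_def)
          have "tpow t \<gamma> * z \<le> real T0 * R" using tpT0[of t] False True z tp0 by (intro mult_mono) auto
          then have "I * (tpow t \<gamma> * z) \<le> I * (real T0 * R)" using Ipos by (intro mult_left_mono) auto
          then have "1 \<le> exp (I * real T0 * R) * exp (- I * tpow t \<gamma> * z)"
            by (simp add: algebra_simps flip: exp_add)
          also have "\<dots> \<le> J * exp (- I * tpow t \<gamma> * z)" by (intro mult_right_mono) (auto simp: J_def)
          finally show ?thesis using gen_tail1[of z "Suc t"] unfolding d_def by linarith
        next
          case False
          then have "measure P {\<omega> \<in> space P. z \<le> d (Suc t) \<omega>} = 0" using gen_tail0[of z "Suc t"] by simp
          moreover have "0 \<le> J * exp (- I * tpow t \<gamma> * z)" using Jpos by simp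
          ultimately show ?thesis by (simp add: d_def)
        qed
      qed
    qed
    have meanB: "\<forall>t\<ge>1. (\<integral>\<omega>. infdist (xt (Suc t) \<omega>) S \<partial>P) \<le> K / real t powr \<gamma>
        \<and> (\<integral>\<omega>. f (xt (Suc t) \<omega>) - (INF y\<in>X. f y) \<partial>P) \<le> L / real t powr \<gamma>"
    proof (intro allI impI conjI)
      fix t :: nat assume t: "1 \<le> t"
      have tpos: "0 < real t powr \<gamma>" using t by simp
      have md: "(\<integral>\<omega>. d (Suc t) \<omega> \<partial>P) \<le> K / real t powr \<gamma>"
      proof (cases "Suc t \<ge> T0")
        case True
        have "(\<integral>\<omega>. d (Suc t) \<omega> \<partial>P) \<le> B0 / \<theta> (Suc t)"
          by (rule mean_gf[OF P dm d0(1) d0(2) wg thpos]) (use Rec[OF True] in \<open>simp add: d_def\<close>)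
        also have "\<dots> = (B0 * a / \<eta>) / (u + real (Suc t)) powr \<gamma>"
          using eta step(1,2) by (simp add: \<theta>_def field_simps)
        also have "\<dots> \<le> (B0 * a / \<eta>) / real t powr \<gamma>"
        proof (rule divide_left_mono)
          show "real t powr \<gamma> \<le> (u + real (Suc t)) powr \<gamma>" using step(2,3) by (intro powr_mono2) auto
        qed (use B0pos step(1,2) eta tpos in \<open>auto intro!: mult_pos_pos\<close>)
        also have "\<dots> \<le> K / real t powr \<gamma>" using tpos by (intro divide_right_mono) (auto simp: K_def)
        finally show ?thesis .
      next
        case False
        have "real t powr \<gamma> \<le> real t powr 1" using step(4) t by (intro powr_mono) auto
        then have "real t powr \<gamma> \<le> real T0" using False by simp
        then have "R * real t powr \<gamma> \<le> R * real T0" using Rpos by (intro mult_left_mono) auto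
        then have "R \<le> (R * real T0) / real t powr \<gamma>" using tpos by (simp add: field_simps)
        also have "\<dots> \<le> K / real t powr \<gamma>" using tpos by (intro divide_right_mono) (auto simp: K_def)
        finally show ?thesis using gen_mean[of "Suc t"] by linarith
      qed
      then show "(\<integral>\<omega>. infdist (xt (Suc t) \<omega>) S \<partial>P) \<le> K / real t powr \<gamma>" by (simp add: d_def)
      have "(\<integral>\<omega>. f (xt (Suc t) \<omega>) - (INF y\<in>X. f y) \<partial>P) \<le> Cl * (\<integral>\<omega>. d (Suc t) \<omega> \<partial>P)" by (rule gen_gap)
      also have "\<dots> \<le> Cl * (K / real t powr \<gamma>)" using md Cl0 by (rule mult_left_mono)
      also have "\<dots> \<le> (Cl + 1) * (K / real t powr \<gamma>)" using Kpos tpos by (intro mult_right_mono) auto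
      finally show "(\<integral>\<omega>. f (xt (Suc t) \<omega>) - (INF y\<in>X. f y) \<partial>P) \<le> L / real t powr \<gamma>" by (simp add: L_def)
    qed
    have Lpos: "L > 0" using Kpos Cl0 by (simp add: L_def)
    show ?thesis
      using tailB meanB Jpos Ipos Kpos Lpos unfolding S_def f_def
      by (intro exI[of _ J] exI[of _ I] exI[of _ K] exI[of _ L]) auto
  qed
qed

end

theorem theorem3:
  fixes X :: "(real^'n) set"
    and P :: "'o measure" and N :: "'w measure" and D :: "'w measure"
    and l :: "real^'n \<Rightarrow> 'w \<Rightarrow> real"
    and g :: "real^'n \<Rightarrow> real^'n"
    and Wp Wm :: "nat \<Rightarrow> 'o \<Rightarrow> 'w"
    and x0 :: "real^'n"
    and a u \<gamma> \<nu> \<kappa> c :: real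
  assumes X: "X \<noteq> {}" "closed X" "bounded X" "convex X"
    and P: "prob_space P"
    and D: "prob_space D" "sets D = sets N"
    and Wmeas: "\<And>t. Wp t \<in> measurable P N" "\<And>t. Wm t \<in> measurable P N"
    and Wdist: "\<And>t. distr P N (Wp t) = D" "\<And>t. distr P N (Wm t) = D"
    and Windep: "prob_space.indep_vars P (\<lambda>_. N)
                   (\<lambda>i. case i of Inl t \<Rightarrow> Wp t | Inr t \<Rightarrow> Wm t) (UNIV :: (nat + nat) set)"
    and lmeas: "(\<lambda>(y, w). l y w) \<in> borel_measurable (borel \<Otimes>\<^sub>M N)"
    and lint: "\<And>y. integrable D (l y)"
    and lvar: "\<exists>B. \<forall>y\<in>X. integrable D (\<lambda>w. (l y w)\<^sup>2) \<and> prob_space.variance D (l y) \<le> B"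
    and lip: "\<exists>C. C-lipschitz_on X (lmean D l)"
    and grad: "\<forall>y\<in>X. ((lmean D l) has_derivative (\<lambda>h. g y \<bullet> h)) (at y)
                       \<or> (\<forall>z\<in>X. lmean D l z \<ge> lmean D l y + g y \<bullet> (z - y))"
    and x0: "x0 \<in> X"
    and step: "a > 0" "u > 0" "0 \<le> \<gamma>" "\<gamma> \<le> 1"
    and nu: "\<nu> > 0"
    and D1: "\<kappa> > 0" "\<forall>y\<in>X. \<forall>ys\<in>{xs \<in> X. \<forall>y\<in>X. lmean D l xs \<le> lmean D l y}. dist y ys = infdist y {xs \<in> X. \<forall>y\<in>X. lmean D l xs \<le> lmean D l y}
                 \<longrightarrow> g y \<bullet> (y - ys) \<ge> \<kappa> * norm (y - ys)"
    and D2: "\<exists>lam>0. \<exists>M::real. \<forall>t. AE \<omega> in P.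
               nn_cond_exp P (kw_filt P N Wp Wm t) (\<lambda>\<omega>. ennreal (exp (lam * norm (kw_dir l \<nu> (kw_iter X l \<nu> (\<lambda>t. a / (u + real t) powr \<gamma>) x0 Wp Wm t \<omega>) (Wp t \<omega>) (Wm t \<omega>))))) \<omega> \<le> ennreal M"
    and D3: "c > 0" "\<forall>y\<in>X. norm (g y - (1 / (2 * \<nu>)) *\<^sub>R (\<chi> i. lmean D l (y + \<nu> *\<^sub>R axis i 1) - lmean D l (y - \<nu> *\<^sub>R axis i 1)))
                 \<le> c * \<nu>\<^sup>2"
    and nu_small: "\<nu> \<le> sqrt (\<kappa> / (3 * c))"
  shows "\<exists>J I K L. J > 0 \<and> I > 0 \<and> K > 0 \<and> L > 0 \<and>
     (\<forall>t z. z \<ge> 0 \<longrightarrow>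
        measure P {\<omega> \<in> space P. infdist (kw_iter X l \<nu> (\<lambda>t. a / (u + real t) powr \<gamma>) x0 Wp Wm (Suc t) \<omega>) {xs \<in> X. \<forall>y\<in>X. lmean D l xs \<le> lmean D l y} \<ge> z} \<le> J * exp (- I * tpow t \<gamma> * z)) \<and>
     (\<forall>t\<ge>1. (\<integral>\<omega>. infdist (kw_iter X l \<nu> (\<lambda>t. a / (u + real t) powr \<gamma>) x0 Wp Wm (Suc t) \<omega>) {xs \<in> X. \<forall>y\<in>X. lmean D l xs \<le> lmean D l y} \<partial>P) \<le> K / real t powr \<gamma>
           \<and> (\<integral>\<omega>. lmean D l (kw_iter X l \<nu> (\<lambda>t. a / (u + real t) powr \<gamma>) x0 Wp Wm (Suc t) \<omega>) - (INF y\<in>X. lmean D l y) \<partial>P) \<le> L / real t powr \<gamma>)"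
proof -
  interpret kwb X P N D l Wp Wm x0 \<nu> "\<lambda>t. a / (u + real t) powr \<gamma>"
    using X P Wmeas Wdist Windep lmeas x0 by (simp add: kwb_def)
  show ?thesis
    by (rule main[where a=a and u=u and \<gamma>=\<gamma> and \<kappa>=\<kappa> and c=c and g=g, OF \<open>bounded X\<close> lint lip refl step nu D1 D2 D3 nu_small])
qed

end
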